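(* Let $d\ge2$ and let $((G_n),(\rho_n),(\kappa^n_k))$ be a fully compatible, slightly pure and uniform $d$-ary cloning system. Then the subgroup $D_d(G_* )\le\mathscr T_d(G_* )$ is doubly asymptotically commutative: there exist sequences $(a_n)_{n\in\mathbb N},(b_n)_{n\in\mathbb N}$ in $D_d(G_* )$ such that $a_nb_n\ne b_na_n$ for every $n$, and every $h\in D_d(G_* )$ commutes with both $a_n$ and $b_n$ for all but finitely many $n$.
   Context: Cloning system, full compatibility, slight purity, uniformity and the group $\mathscr T_d(G_* )$ of classes $[T,g,U]$ are as follows. For $\sigma\in S_n$, $\zeta^n_k:S_n\to S_{n+d-1}$ is the standard cloning map replacing the $k$-th strand of $\sigma$ by $d$ parallel strands. A $d$-ary cloning system consists of groups $G_n$, homomorphisms $\rho_n:G_n\to S_n$ and injective maps $\kappa^n_k:G_n\to G_{n+d-1}$ ($1\le k\le n$, written on the right) with (C1) $(gh)\kappa^n_k=(g)\kappa^n_{\rho_n(h)k}(h)\kappa^n_k$, (C2) $\kappa^n_l\circ\kappa^{n+d-1}_k=\kappa^n_k\circ\kappa^{n+d-1}_{l+d-1}$ for $k<l$, (C3) $\rho_{n+d-1}((g)\kappa^n_k)(i)=((\rho_n(g))\zeta^n_k)(i)$ for $i\notin\{k,\dots,k+d-1\}$. Fully compatible: (C3) holds for all $i$. Slightly pure: $\rho_n(g)(n)=n$ always. Uniform: $\kappa^n_k\circ\kappa^{n+d-1}_\ell=\kappa^n_k\circ\kappa^{n+d-1}_{\ell'}$ for $k\le\ell\le\ell'\le k+d-1$.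 $\mathscr T_d(G_* )$ consists of classes $[T,g,U]$ ($T,U$ finite rooted $d$-ary trees with $n$ leaves, $g\in G_n$) modulo the equivalence generated by expansions $(T,g,U)\sim(T',(g)\kappa^n_k,U')$, where $U'$ adds a $d$-ary caret to the $k$-th leaf of $U$ and $T'$ adds one to the $\rho_n(g)(k)$-th leaf of $T$; product $[T,g,U][U,h,W]=[T,gh,W]$. For a $d$-ary tree $T$, $\delta_r(T)$ denotes the number of edges from the root to the rightmost leaf. $D_d(G_* )$ is the subgroup of $\mathscr T_d(G_* )$ consisting of the elements $[T,g,U]$ with $\delta_r(T)=\delta_r(U)$ (under the standing hypotheses this is the preimage, under the map $[T,g,U]\mapsto[T,\rho_n(g),U]$ onto a subgroup of the Higman–Thompson group $V_d$, of the kernel of the homomorphism $[T,\sigma,U]\mapsto\delta_r(T)-\delta_r(U)$ defined on the subgroup of $V_d$ of elements fixing the rightmost leaf). *)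

theory Defs
  imports "HOL-Algebra.Sym_Groups"
begin

datatype dtree = Lf | Nd "dtree list"

fun dary :: "nat \<Rightarrow> dtree \<Rightarrow> bool" where
  "dary d Lf = True"
| "dary d (Nd ts) = (length ts = d \<and> (\<forall>t\<in>set ts. dary d t))"

primrec leaves :: "dtree \<Rightarrow> nat" where
  "leaves Lf = 1"
| "leaves (Nd ts) = sum_list (map leaves ts)"

text \<open>Add a d-ary caret to the k-th leaf (leaves numbered 1,2,... from left to right).\<close>
fun add_caret :: "nat \<Rightarrow> nat \<Rightarrow> dtree \<Rightarrow> dtree"
and add_caret_list :: "nat \<Rightarrow> nat \<Rightarrow> dtree list \<Rightarrow> dtree list" where
  "add_caret d k Lf = (if k = 1 then Nd (replicate d Lf) else Lf)"
| "add_caret d k (Nd ts) = Nd (add_caret_list d k ts)"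
| "add_caret_list d k [] = []"
| "add_caret_list d k (t # ts) =
     (if k \<le> leaves t then add_caret d k t # ts else t # add_caret_list d (k - leaves t) ts)"

lemma last_size_le: "ts \<noteq> [] \<Longrightarrow> size (last ts) \<le> size_list size ts"
  by (intro size_list_estimation'[OF last_in_set]) auto

function delta_r :: "dtree \<Rightarrow> nat" where
  "delta_r Lf = 0"
| "delta_r (Nd []) = 0"
| "delta_r (Nd (t # ts)) = 1 + delta_r (last (t # ts))"
  by pat_completeness auto
termination
  by (relation "measure size") (auto dest!: last_size_le)

text \<open>The standard cloning map zeta^n_k on permutations of {1..n}: the k-th strand
  (from k to sigma k) is replaced by d parallel strands.\<close>
definition clone_perm :: "nat \<Rightarrow> nat \<Rightarrow> (nat \<Rightarrow> nat) \<Rightarrow> nat \<Rightarrow> nat" where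
  "clone_perm d k \<sigma> i =
     (let sh = (\<lambda>j. if j < \<sigma> k then j else j + (d - 1)) in
      if i < k then sh (\<sigma> i)
      else if i < k + d then \<sigma> k + (i - k)
      else sh (\<sigma> (i - (d - 1))))"

text \<open>Groups G n (n \<ge> 1), homomorphisms rho n : G n \<rightarrow> S_n, and injective maps
  kappa n k : G n \<rightarrow> G (n+d-1) for 1 \<le> k \<le> n (written on the right in the paper).\<close>
definition cloning_system ::
  "nat \<Rightarrow> (nat \<Rightarrow> 'g monoid) \<Rightarrow> (nat \<Rightarrow> 'g \<Rightarrow> nat \<Rightarrow> nat) \<Rightarrow> (nat \<Rightarrow> nat \<Rightarrow> 'g \<Rightarrow> 'g) \<Rightarrow> bool"
where
  "cloning_system d G \<rho> \<kappa> \<longleftrightarrow>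
     (\<forall>n\<ge>1. group (G n) \<and> \<rho> n \<in> hom (G n) (sym_group n)) \<and>
     (\<forall>n\<ge>1. \<forall>k\<in>{1..n}. \<kappa> n k \<in> carrier (G n) \<rightarrow> carrier (G (n + d - 1))
                        \<and> inj_on (\<kappa> n k) (carrier (G n))) \<and>
     (\<forall>n\<ge>1. \<forall>k\<in>{1..n}. \<forall>g\<in>carrier (G n). \<forall>h\<in>carrier (G n).
        \<kappa> n k (g \<otimes>\<^bsub>G n\<^esub> h) = \<kappa> n (\<rho> n h k) g \<otimes>\<^bsub>G (n + d - 1)\<^esub> \<kappa> n k h) \<and>
     (\<forall>n\<ge>1. \<forall>k l. 1 \<le> k \<and> k < l \<and> l \<le> n \<longrightarrow> (\<forall>g\<in>carrier (G n).
        \<kappa> (n + d - 1) k (\<kappa> n l g) = \<kappa> (n + d - 1) (l + d - 1) (\<kappa> n k g))) \<and>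
     (\<forall>n\<ge>1. \<forall>k\<in>{1..n}. \<forall>g\<in>carrier (G n). \<forall>i. i \<notin> {k..k + d - 1} \<longrightarrow>
        \<rho> (n + d - 1) (\<kappa> n k g) i = clone_perm d k (\<rho> n g) i)"

definition fully_compatible ::
  "nat \<Rightarrow> (nat \<Rightarrow> 'g monoid) \<Rightarrow> (nat \<Rightarrow> 'g \<Rightarrow> nat \<Rightarrow> nat) \<Rightarrow> (nat \<Rightarrow> nat \<Rightarrow> 'g \<Rightarrow> 'g) \<Rightarrow> bool"
where
  "fully_compatible d G \<rho> \<kappa> \<longleftrightarrow>
     (\<forall>n\<ge>1. \<forall>k\<in>{1..n}. \<forall>g\<in>carrier (G n). \<forall>i.
        \<rho> (n + d - 1) (\<kappa> n k g) i = clone_perm d k (\<rho> n g) i)"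

definition slightly_pure :: "(nat \<Rightarrow> 'g monoid) \<Rightarrow> (nat \<Rightarrow> 'g \<Rightarrow> nat \<Rightarrow> nat) \<Rightarrow> bool" where
  "slightly_pure G \<rho> \<longleftrightarrow> (\<forall>n\<ge>1. \<forall>g\<in>carrier (G n). \<rho> n g n = n)"

definition uniform ::
  "nat \<Rightarrow> (nat \<Rightarrow> 'g monoid) \<Rightarrow> (nat \<Rightarrow> nat \<Rightarrow> 'g \<Rightarrow> 'g) \<Rightarrow> bool"
where
  "uniform d G \<kappa> \<longleftrightarrow>
     (\<forall>n\<ge>1. \<forall>k\<in>{1..n}. \<forall>l l'. k \<le> l \<and> l \<le> l' \<and> l' \<le> k + d - 1 \<longrightarrow>
        (\<forall>g\<in>carrier (G n). \<kappa> (n + d - 1) l (\<kappa> n k g) = \<kappa> (n + d - 1) l' (\<kappa> n k g)))"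

type_synonym 'g triple = "dtree \<times> 'g \<times> dtree"

definition valid_triple ::
  "nat \<Rightarrow> (nat \<Rightarrow> 'g monoid) \<Rightarrow> 'g triple \<Rightarrow> bool" where
  "valid_triple d G x = (case x of (T, g, U) \<Rightarrow>
      dary d T \<and> dary d U \<and> leaves T = leaves U \<and> g \<in> carrier (G (leaves U)))"

definition expansion ::
  "nat \<Rightarrow> (nat \<Rightarrow> 'g monoid) \<Rightarrow> (nat \<Rightarrow> 'g \<Rightarrow> nat \<Rightarrow> nat) \<Rightarrow> (nat \<Rightarrow> nat \<Rightarrow> 'g \<Rightarrow> 'g)
     \<Rightarrow> 'g triple \<Rightarrow> 'g triple \<Rightarrow> bool" where
  "expansion d G \<rho> \<kappa> x y = (case x of (T, g, U) \<Rightarrow>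
      valid_triple d G x \<and>
      (\<exists>k\<in>{1..leaves U}. y = (add_caret d (\<rho> (leaves U) g k) T,
                                 \<kappa> (leaves U) k g,
                                 add_caret d k U)))"

definition tclass ::
  "nat \<Rightarrow> (nat \<Rightarrow> 'g monoid) \<Rightarrow> (nat \<Rightarrow> 'g \<Rightarrow> nat \<Rightarrow> nat) \<Rightarrow> (nat \<Rightarrow> nat \<Rightarrow> 'g \<Rightarrow> 'g)
     \<Rightarrow> 'g triple \<Rightarrow> 'g triple set" where
  "tclass d G \<rho> \<kappa> x = {y. equivclp (expansion d G \<rho> \<kappa>) x y}"

definition Td_carrier ::
  "nat \<Rightarrow> (nat \<Rightarrow> 'g monoid) \<Rightarrow> (nat \<Rightarrow> 'g \<Rightarrow> nat \<Rightarrow> nat) \<Rightarrow> (nat \<Rightarrow> nat \<Rightarrow> 'g \<Rightarrow> 'g)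
     \<Rightarrow> 'g triple set set" where
  "Td_carrier d G \<rho> \<kappa> = {tclass d G \<rho> \<kappa> x | x. valid_triple d G x}"

definition Td_mult ::
  "nat \<Rightarrow> (nat \<Rightarrow> 'g monoid) \<Rightarrow> (nat \<Rightarrow> 'g \<Rightarrow> nat \<Rightarrow> nat) \<Rightarrow> (nat \<Rightarrow> nat \<Rightarrow> 'g \<Rightarrow> 'g)
     \<Rightarrow> 'g triple set \<Rightarrow> 'g triple set \<Rightarrow> 'g triple set" where
  "Td_mult d G \<rho> \<kappa> a b =
     (\<Union>{tclass d G \<rho> \<kappa> (T, g \<otimes>\<^bsub>G (leaves U)\<^esub> h, W) | T g U h W.
          (T, g, U) \<in> a \<and> (U, h, W) \<in> b})"

definition Dd_carrier ::
  "nat \<Rightarrow> (nat \<Rightarrow> 'g monoid) \<Rightarrow> (nat \<Rightarrow> 'g \<Rightarrow> nat \<Rightarrow> nat) \<Rightarrow> (nat \<Rightarrow> nat \<Rightarrow> 'g \<Rightarrow> 'g)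
     \<Rightarrow> 'g triple set set" where
  "Dd_carrier d G \<rho> \<kappa> = {tclass d G \<rho> \<kappa> (T, g, U) | T g U.
       valid_triple d G (T, g, U) \<and> delta_r T = delta_r U}"

end

theory Submission imports Defs begin

fun laddr :: "dtree \<Rightarrow> nat list list" and laddrs :: "nat \<Rightarrow> dtree list \<Rightarrow> nat list list" where
  "laddr Lf = [[]]"
| "laddr (Nd ts) = laddrs 0 ts"
| "laddrs i [] = []"
| "laddrs i (t # ts) = map (Cons i) (laddr t) @ laddrs (Suc i) ts"

fun nodes :: "dtree \<Rightarrow> nat list set" and nodess :: "nat \<Rightarrow> dtree list \<Rightarrow> nat list set" where
  "nodes Lf = {}"
| "nodes (Nd ts) = insert [] (nodess 0 ts)"
| "nodess i [] = {}"
| "nodess i (t # ts) = Cons i ` nodes t \<union> nodess (Suc i) ts"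

lemma length_laddr:
  "length (laddr t) = leaves t"
  "length (laddrs i ts) = sum_list (map leaves ts)"
  by (induction t and i ts rule: laddr_laddrs.induct) auto

lemma laddrs_rep: "laddrs i (replicate m Lf) = map (\<lambda>j. [j]) [i..<i+m]"
  by (induction m arbitrary: i) (auto simp: upt_rec)

lemma nodess_rep: "nodess i (replicate m Lf) = {}"
  by (induction m arbitrary: i) auto

lemma laddr_add_caret:
  "1 \<le> k \<Longrightarrow> k \<le> leaves t \<Longrightarrow> laddr (add_caret d k t) =
     take (k-1) (laddr t) @ map (\<lambda>j. laddr t ! (k-1) @ [j]) [0..<d] @ drop k (laddr t)"
  "1 \<le> k \<Longrightarrow> k \<le> sum_list (map leaves ts) \<Longrightarrow> \<forall>i. laddrs i (add_caret_list d k ts) =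
     take (k-1) (laddrs i ts) @ map (\<lambda>j. laddrs i ts ! (k-1) @ [j]) [0..<d] @ drop k (laddrs i ts)"
proof (induction d k t and d k ts rule: add_caret_add_caret_list.induct)
  case (1 d k)
  then show ?case by (simp add: laddrs_rep)
next
  case (2 d k ts)
  then show ?case by simp
next
  case (3 d k)
  then show ?case by simp
next
  case (4 d k t ts)
  show ?case
  proof (cases "k \<le> leaves t")
    case True
    moreover have "k - Suc 0 < leaves t" using True 4 by simp
    ultimately show ?thesis using 4 by (simp add: length_laddr take_append drop_append nth_append take_map drop_map)
  next
    case False
    then have "k - leaves t \<ge> 1" "k - leaves t \<le> sum_list (map leaves ts)" "\<not> k - Suc 0 < leaves t" using 4 by auto
    then show ?thesis using 4(2) False
      by (simp add: length_laddr take_append drop_append nth_append take_map drop_map)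
  qed
qed

lemma nodes_add_caret:
  "1 \<le> k \<Longrightarrow> k \<le> leaves t \<Longrightarrow> nodes (add_caret d k t) = insert (laddr t ! (k-1)) (nodes t)"
  "1 \<le> k \<Longrightarrow> k \<le> sum_list (map leaves ts) \<Longrightarrow> \<forall>i. nodess i (add_caret_list d k ts) =
     insert (laddrs i ts ! (k-1)) (nodess i ts)"
proof (induction d k t and d k ts rule: add_caret_add_caret_list.induct)
  case (1 d k)
  then show ?case by (simp add: nodess_rep)
next
  case (2 d k ts)
  then show ?case by auto
next
  case (3 d k)
  then show ?case by simp
next
  case (4 d k t ts)
  show ?case
  proof (cases "k \<le> leaves t")
    case True
    then show ?thesis using 4 by (auto simp: length_laddr nth_append)
  next
    case False
    then have "k - leaves t \<ge> 1" "k - leaves t \<le> sum_list (map leaves ts)" using 4 by auto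
    then show ?thesis using 4(2) False
      by (auto simp: length_laddr nth_append)
  qed
qed

lemma leaves_add_caret:
  "1 \<le> k \<Longrightarrow> k \<le> leaves t \<Longrightarrow> leaves (add_caret d k t) = leaves t + d - 1"
  by (simp add: length_laddr[symmetric] laddr_add_caret)

lemma dary_add_caret:
  "dary d t \<Longrightarrow> dary d (add_caret d k t)"
  "\<forall>t\<in>set ts. dary d t \<Longrightarrow> (\<forall>t\<in>set (add_caret_list d k ts). dary d t) \<and> length (add_caret_list d k ts) = length ts"
  by (induction d k t and d k ts rule: add_caret_add_caret_list.induct) auto

lemma mem_nodess: "x \<in> nodess i ts \<longleftrightarrow> (\<exists>j a. x = (i+j) # a \<and> j < length ts \<and> a \<in> nodes (ts!j))"
proof (induction ts arbitrary: i x)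
  case Nil then show ?case by simp
next
  case (Cons t ts)
  show ?case
  proof
    assume "x \<in> nodess i (t # ts)"
    then show "\<exists>j a. x = (i+j) # a \<and> j < length (t#ts) \<and> a \<in> nodes ((t#ts)!j)"
    proof (simp only: nodess.simps Un_iff, elim disjE)
      assume "x \<in> Cons i ` nodes t" then show ?thesis by force
    next
      assume "x \<in> nodess (Suc i) ts"
      then obtain j a where "x = (Suc i + j) # a" "j < length ts" "a \<in> nodes (ts!j)" using Cons.IH by blast
      then show ?thesis by (intro exI[of _ "Suc j"] exI[of _ a]) auto
    qed
  next
    assume "\<exists>j a. x = (i+j) # a \<and> j < length (t#ts) \<and> a \<in> nodes ((t#ts)!j)"
    then obtain j a where j: "x = (i+j) # a" "j < length (t#ts)" "a \<in> nodes ((t#ts)!j)" by blast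
    show "x \<in> nodess i (t # ts)"
    proof (cases j)
      case 0 then show ?thesis using j by simp
    next
      case (Suc j') then show ?thesis using j Cons.IH[where i="Suc i" and x=x] by auto
    qed
  qed
qed

lemma mem_laddrs: "x \<in> set (laddrs i ts) \<longleftrightarrow> (\<exists>j a. x = (i+j) # a \<and> j < length ts \<and> a \<in> set (laddr (ts!j)))"
proof (induction ts arbitrary: i x)
  case Nil then show ?case by simp
next
  case (Cons t ts)
  show ?case
  proof
    assume "x \<in> set (laddrs i (t # ts))"
    then show "\<exists>j a. x = (i+j) # a \<and> j < length (t#ts) \<and> a \<in> set (laddr ((t#ts)!j))"
    proof (simp only: laddrs.simps set_append Un_iff, elim disjE)
      assume "x \<in> set (map (Cons i) (laddr t))" then show ?thesis by force
    next
      assume "x \<in> set (laddrs (Suc i) ts)"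
      then obtain j a where "x = (Suc i + j) # a" "j < length ts" "a \<in> set (laddr (ts!j))" using Cons.IH by blast
      then show ?thesis by (intro exI[of _ "Suc j"] exI[of _ a]) auto
    qed
  next
    assume "\<exists>j a. x = (i+j) # a \<and> j < length (t#ts) \<and> a \<in> set (laddr ((t#ts)!j))"
    then obtain j a where j: "x = (i+j) # a" "j < length (t#ts)" "a \<in> set (laddr ((t#ts)!j))" by blast
    show "x \<in> set (laddrs i (t # ts))"
    proof (cases j)
      case 0 then show ?thesis using j by simp
    next
      case (Suc j') then show ?thesis using j Cons.IH[where i="Suc i" and x=x] by auto
    qed
  qed
qed

lemma nil_nodess[simp]: "[] \<notin> nodess i ts"
  by (simp add: mem_nodess)

lemma nil_laddrs[simp]: "[] \<notin> set (laddrs i ts)"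
  by (simp add: mem_laddrs)

lemma cons_nodess[simp]: "(j # a) \<in> nodess 0 ts \<longleftrightarrow> j < length ts \<and> a \<in> nodes (ts!j)"
  by (simp add: mem_nodess)

lemma cons_laddrs[simp]: "(j # a) \<in> set (laddrs 0 ts) \<longleftrightarrow> j < length ts \<and> a \<in> set (laddr (ts!j))"
  by (simp add: mem_laddrs)

lemma nil_nodes: "[] \<in> nodes t \<longleftrightarrow> t \<noteq> Lf"
  by (cases t) auto

lemma cons_nodes: "(j # a) \<in> nodes (Nd ts) \<longleftrightarrow> j < length ts \<and> a \<in> nodes (ts!j)"
  by (simp add: mem_nodess)

lemma nil_laddr: "[] \<in> set (laddr t) \<longleftrightarrow> t = Lf"
  by (cases t) (auto simp: mem_laddrs)

lemma cons_laddr: "(j # a) \<in> set (laddr (Nd ts)) \<longleftrightarrow> j < length ts \<and> a \<in> set (laddr (ts!j))"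
  by (simp add: mem_laddrs)

lemma finite_nodes: "finite (nodes t)" "finite (nodess i ts)"
  by (induction t and i ts rule: nodes_nodess.induct) auto

lemma laddr_not_nodes: "a \<in> set (laddr t) \<Longrightarrow> a \<notin> nodes t"
proof (induction t arbitrary: a)
  case Lf then show ?case by simp
next
  case (Nd ts)
  show ?case
  proof (cases a)
    case Nil then show ?thesis using Nd by (simp add: nil_laddr)
  next
    case (Cons j a')
    then show ?thesis using Nd by (auto simp: cons_laddr cons_nodes)
  qed
qed

lemma nodes_inj: "dary d t \<Longrightarrow> dary d u \<Longrightarrow> nodes t = nodes u \<Longrightarrow> t = u"
proof (induction t arbitrary: u)
  case Lf then show ?case using nil_nodes[of u] by auto
next
  case (Nd ts)
  then obtain vs where u: "u = Nd vs" using nil_nodes[of u] by (cases u) auto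
  have len: "length ts = length vs" using Nd u by simp
  show ?case unfolding u
  proof (simp, rule nth_equalityI[OF len])
    fix j assume j: "j < length ts"
    have "\<forall>a. a \<in> nodes (ts!j) \<longleftrightarrow> a \<in> nodes (vs!j)"
    proof
      fix a show "a \<in> nodes (ts!j) \<longleftrightarrow> a \<in> nodes (vs!j)"
        using Nd.prems(3) j len unfolding u by (metis cons_nodess nodes.simps(2) insert_iff list.distinct(1))
    qed
    then have "nodes (ts!j) = nodes (vs!j)" by blast
    then show "ts!j = vs!j" using Nd j len u by auto
  qed
qed

lemma nodes_step:
  "dary d u \<Longrightarrow> dary d v \<Longrightarrow> nodes u \<subset> nodes v \<Longrightarrow> \<exists>a\<in>set (laddr u). a \<in> nodes v"
proof (induction u arbitrary: v)
  case Lf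
  then have "v \<noteq> Lf" by auto
  then show ?case using nil_nodes[of v] by simp
next
  case (Nd ts)
  then have "[] \<in> nodes v" by auto
  then obtain vs where v: "v = Nd vs" using nil_nodes[of v] by (cases v) auto
  have len: "length ts = length vs" using Nd v by simp
  obtain x where x: "x \<in> nodes v" "x \<notin> nodes (Nd ts)" using Nd.prems(3) by blast
  then obtain j a where ja: "x = j # a" using v by (cases x) auto
  have j: "j < length ts" "a \<in> nodes (vs!j)" "a \<notin> nodes (ts!j)"
    using x len v ja by (auto simp: cons_nodes)
  have sub: "nodes (ts!j) \<subseteq> nodes (vs!j)"
  proof
    fix y assume "y \<in> nodes (ts!j)"
    then have "j # y \<in> nodes (Nd ts)" using j(1) by simp
    then have "j # y \<in> nodes (Nd vs)" using Nd.prems(3) v by blast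
    then show "y \<in> nodes (vs!j)" by simp
  qed
  have "ts!j \<in> set ts" using j by simp
  moreover have "dary d (ts!j)" "dary d (vs!j)" using Nd.prems j len v by auto
  ultimately obtain b where "b \<in> set (laddr (ts!j))" "b \<in> nodes (vs!j)"
    using Nd.IH[of "ts!j" "vs!j"] sub j by blast
  then show ?case using j v len by (intro bexI[of _ "j # b"]) (auto simp: cons_laddr cons_nodes)
qed

lemma leaves_pos: "0 < d \<Longrightarrow> dary d t \<Longrightarrow> 0 < leaves t"
proof (induction t)
  case Lf then show ?case by simp
next
  case (Nd ts)
  then obtain t where "t \<in> set ts" by (cases ts) auto
  then show ?case using Nd by (auto simp: sum_list_map_remove1[of t])
qed

lemma add_caret_comm:
  assumes "dary d U" "1 \<le> k" "k < l" "l \<le> leaves U" "0 < d"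
  shows "add_caret d k (add_caret d l U) = add_caret d (l + d - 1) (add_caret d k U)"
proof (rule nodes_inj[of d])
  let ?L = "laddr U"
  have lk: "leaves (add_caret d k U) = leaves U + d - 1" using assms by (simp add: leaves_add_caret)
  have ll: "leaves (add_caret d l U) = leaves U + d - 1" using assms by (simp add: leaves_add_caret)
  have lenL: "length ?L = leaves U" by (simp add: length_laddr)
  have ar: "k - 1 < l - 1" "\<not> l + d - 1 - 1 < k - 1" "\<not> l + d - 1 - 1 - (k-1) < d" 
     "k + (l + d - 1 - 1 - (k - 1) - d) = l - 1" using assms by auto
  have "nodes (add_caret d k (add_caret d l U)) = insert (laddr (add_caret d l U) ! (k-1)) (insert (?L!(l-1)) (nodes U))"
    using assms ll by (simp add: nodes_add_caret)
  also have "laddr (add_caret d l U) ! (k-1) = ?L ! (k-1)"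
    using assms lenL ar by (simp add: laddr_add_caret nth_append)
  also have "insert (?L ! (k-1)) (insert (?L!(l-1)) (nodes U)) =
     insert (laddr (add_caret d k U) ! (l + d - 1 - 1)) (insert (?L!(k-1)) (nodes U))"
  proof -
    have "laddr (add_caret d k U) ! (l + d - 1 - 1) = ?L ! (l-1)"
      using assms lenL ar by (simp add: laddr_add_caret nth_append)
    then show ?thesis by auto
  qed
  also have "\<dots> = nodes (add_caret d (l + d - 1) (add_caret d k U))"
    using assms lk by (simp add: nodes_add_caret)
  finally show "nodes (add_caret d k (add_caret d l U)) = nodes (add_caret d (l + d - 1) (add_caret d k U))" .
qed (meson dary_add_caret(1) assms(1))+

definition dmd :: "('a \<Rightarrow> 'a \<Rightarrow> bool) \<Rightarrow> bool" where
  "dmd r \<longleftrightarrow> (\<forall>x y z. r x y \<longrightarrow> r x z \<longrightarrow> y = z \<or> (\<exists>w. r y w \<and> r z w))"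

lemma diamond_strip:
  assumes D: "dmd r"
  shows "r\<^sup>*\<^sup>* x z \<Longrightarrow> r x y \<Longrightarrow> \<exists>w. r\<^sup>*\<^sup>* y w \<and> (z = w \<or> r z w)"
proof (induction rule: rtranclp_induct)
  case base then show ?case by auto
next
  case (step z z')
  then obtain w where w: "r\<^sup>*\<^sup>* y w" "z = w \<or> r z w" by blast
  from w(2) show ?case
  proof
    assume "z = w" then show ?thesis using w step
      by (intro exI[of _ z']) (auto intro: rtranclp.rtrancl_into_rtrancl)
  next
    assume "r z w"
    from D step(2) this have "z' = w \<or> (\<exists>v. r z' v \<and> r w v)" unfolding dmd_def by blast
    then show ?thesis using w(1) by (auto intro: rtranclp.rtrancl_into_rtrancl)
  qed
qed

lemma diamond_confl:
  assumes D: "dmd r"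
  shows "r\<^sup>*\<^sup>* x y \<Longrightarrow> r\<^sup>*\<^sup>* x z \<Longrightarrow> \<exists>w. r\<^sup>*\<^sup>* y w \<and> r\<^sup>*\<^sup>* z w"
proof (induction rule: rtranclp_induct)
  case base then show ?case by auto
next
  case (step y y')
  then obtain w where w: "r\<^sup>*\<^sup>* y w" "r\<^sup>*\<^sup>* z w" by blast
  obtain v where "r\<^sup>*\<^sup>* y' v" "w = v \<or> r w v" using diamond_strip[OF D w(1) step(2)] by blast
  then show ?case using w(2) by (auto intro: rtranclp.rtrancl_into_rtrancl)
qed

lemma diamond_equiv:
  assumes D: "dmd r"
  shows "equivclp r x y \<Longrightarrow> \<exists>w. r\<^sup>*\<^sup>* x w \<and> r\<^sup>*\<^sup>* y w"
proof (induction rule: equivclp_induct)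
  case base then show ?case by auto
next
  case (step y z)
  then obtain w where w: "r\<^sup>*\<^sup>* x w" "r\<^sup>*\<^sup>* y w" by blast
  from step(2) show ?case
  proof
    assume "r y z"
    then obtain v where "r\<^sup>*\<^sup>* w v" "r\<^sup>*\<^sup>* z v" using diamond_confl[OF D w(2)] by blast
    then show ?thesis using w(1) by (meson rtranclp_trans)
  next
    assume "r z y"
    then show ?thesis using w by (meson converse_rtranclp_into_rtranclp)
  qed
qed

lemma card_diff_less: "A \<subset> B \<Longrightarrow> B \<subseteq> C \<Longrightarrow> finite C \<Longrightarrow> card (C - B) < card (C - A)"
  by (rule psubset_card_mono) auto

lemma laddr_add_caret_before:
  assumes "1 \<le> k" "k < l" "l \<le> leaves U"
  shows "laddr (add_caret d l U) ! (k - 1) = laddr U ! (k - 1)"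
proof -
  have "k - 1 < l - 1" "length (laddr U) = leaves U" using assms by (auto simp: length_laddr)
  then show ?thesis using assms by (simp add: laddr_add_caret nth_append)
qed

lemma sum_rep1[simp]: "sum_list (replicate m (Suc 0)) = m"
  by (induction m) auto

lemma sum_leaves_rep[simp]: "sum_list (map leaves (replicate m Lf)) = m"
  by simp

lemma add_caret_0: "add_caret d 0 t = t" "add_caret_list d 0 ts = ts"
  by (induction d "0::nat" t and d "0::nat" ts rule: add_caret_add_caret_list.induct) auto

lemma Lf_rep: "0 < n \<Longrightarrow> Lf # replicate (n - 1) Lf = replicate n Lf"
  by (cases n) auto

lemma add_caret_list_append:
  "add_caret_list d k (xs @ ys) = (if k \<le> sum_list (map leaves xs) then add_caret_list d k xs @ ys
      else xs @ add_caret_list d (k - sum_list (map leaves xs)) ys)"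
  by (induction xs arbitrary: k) (auto simp: add_caret_0)

lemma add_caret_list_single: "k \<le> leaves t \<Longrightarrow> add_caret_list d k [t] = [add_caret d k t]"
  by simp

lemma add_caret_list_rep:
  "1 \<le> k \<Longrightarrow> k \<le> m \<Longrightarrow> add_caret_list d k (replicate m Lf) =
     replicate (k - 1) Lf @ [Nd (replicate d Lf)] @ replicate (m - k) Lf"
proof (induction m arbitrary: k)
  case 0 then show ?case by simp
next
  case (Suc m)
  show ?case
  proof (cases "k = 1")
    case True then show ?thesis by simp
  next
    case False
    then have "k - 1 \<ge> 1" "k - 1 \<le> m" using Suc by auto
    then show ?thesis using Suc.IH[of "k - 1"] False Suc.prems Lf_rep[of "k - 1"]
      by (cases k) (auto simp: replicate_app_Cons_same)
  qed
qed

lemma add_caret_list_prefix: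
  "1 \<le> k \<Longrightarrow> add_caret_list d (sum_list (map leaves xs) + k) (xs @ ys) = xs @ add_caret_list d k ys"
  by (simp add: add_caret_list_append)

lemma length_add_caret_list: "length (add_caret_list d k ts) = length ts"
  by (induction ts arbitrary: k) auto

lemma leaves_Nd_append: "leaves (Nd (xs @ ys)) = sum_list (map leaves xs) + sum_list (map leaves ys)"
  by simp

fun rc :: "nat \<Rightarrow> nat \<Rightarrow> dtree \<Rightarrow> dtree" where
  "rc d 0 S = S"
| "rc d (Suc n) S = Nd (replicate (d - 1) Lf @ [rc d n S])"

lemma rc_rc: "rc d m (rc d j S) = rc d (m + j) S"
  by (induction m) auto

lemma leaves_rc: "leaves (rc d n S) = n * (d - 1) + leaves S"
  by (induction n) auto

lemma dary_rc: "0 < d \<Longrightarrow> dary d S \<Longrightarrow> dary d (rc d n S)"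
  by (induction n) auto

lemma delta_r_rc: "delta_r (rc d n S) = n + delta_r S"
proof (induction n)
  case 0 then show ?case by simp
next
  case (Suc n)
  show ?case
  proof (cases "d - 1")
    case 0 then show ?thesis using Suc by simp
  next
    case (Suc e)
    then have "replicate (d - 1) Lf @ [rc d n S] = Lf # (replicate e Lf @ [rc d n S])" by simp
    then show ?thesis using Suc.IH by simp
  qed
qed

lemma add_caret_rc:
  "1 \<le> k \<Longrightarrow> k \<le> leaves S \<Longrightarrow> add_caret d (n * (d - 1) + k) (rc d n S) = rc d n (add_caret d k S)"
proof (induction n)
  case 0 then show ?case by simp
next
  case (Suc n)
  have eq: "Suc n * (d - 1) + k = sum_list (map leaves (replicate (d - 1) Lf)) + (n * (d - 1) + k)" by simp
  have "add_caret d (Suc n * (d - 1) + k) (rc d (Suc n) S) =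
     Nd (add_caret_list d (sum_list (map leaves (replicate (d - 1) Lf)) + (n * (d - 1) + k)) (replicate (d - 1) Lf @ [rc d n S]))"
    by (simp only: eq rc.simps add_caret.simps)
  also have "\<dots> = Nd (replicate (d - 1) Lf @ add_caret_list d (n * (d - 1) + k) [rc d n S])"
    using Suc.prems by (subst add_caret_list_prefix) auto
  also have "\<dots> = rc d (Suc n) (add_caret d k S)"
    using Suc by (simp add: leaves_rc)
  finally show ?case .
qed

fun glast :: "dtree \<Rightarrow> dtree \<Rightarrow> dtree" and glasts :: "dtree list \<Rightarrow> dtree \<Rightarrow> dtree list" where
  "glast Lf S = S"
| "glast (Nd ts) S = Nd (glasts ts S)"
| "glasts [] S = []"
| "glasts [t] S = [glast t S]"
| "glasts (t # u # ts) S = t # glasts (u # ts) S"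

lemma glasts_snoc: "glasts (xs @ [t]) S = xs @ [glast t S]"
  by (induction xs rule: induct_list012) auto

lemma dary_nonempty: "0 < d \<Longrightarrow> dary d (Nd ts) \<Longrightarrow> \<exists>xs t. ts = xs @ [t]"
  by (cases ts rule: rev_cases) auto

lemma glast_Lf: "glast U Lf = U" "glasts ts Lf = ts"
  by (induction U Lf and ts Lf rule: glast_glasts.induct) auto

lemma glast_props:
  assumes "0 < d" "dary d U" "dary d S"
  shows "dary d (glast U S) \<and> leaves (glast U S) + 1 = leaves U + leaves S
         \<and> delta_r (glast U S) = delta_r U + delta_r S"
  using assms(2)
proof (induction U)
  case Lf then show ?case using assms by simp
next
  case (Nd ts)
  obtain xs t where ts: "ts = xs @ [t]" using dary_nonempty[OF assms(1) Nd.prems] by blast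
  have IH: "dary d (glast t S) \<and> leaves (glast t S) + 1 = leaves t + leaves S
         \<and> delta_r (glast t S) = delta_r t + delta_r S" using Nd ts by auto
  have dr: "delta_r (Nd (ys @ [u])) = 1 + delta_r u" for ys u by (cases ys) auto
  show ?case using Nd.prems IH ts by (auto simp: glasts_snoc dr)
qed

lemma add_caret_glast_right:
  assumes "0 < d" "dary d U" "1 \<le> k" "k \<le> leaves S" "dary d S"
  shows "add_caret d (leaves U - 1 + k) (glast U S) = glast U (add_caret d k S)"
  using assms(2)
proof (induction U)
  case Lf then show ?case by simp
next
  case (Nd ts)
  obtain xs t where ts: "ts = xs @ [t]" using dary_nonempty[OF assms(1) Nd.prems] by blast
  have dt: "dary d t" using Nd.prems ts by simp
  have lt: "1 \<le> leaves t" using leaves_pos[OF assms(1) dt] by simp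
  have IH: "add_caret d (leaves t - 1 + k) (glast t S) = glast t (add_caret d k S)" using Nd.IH dt ts by simp
  have lg: "leaves (glast t S) + 1 = leaves t + leaves S" using glast_props[OF assms(1) dt assms(5)] by simp
  have eq: "leaves (Nd ts) - 1 + k = sum_list (map leaves xs) + (leaves t - 1 + k)" using ts lt by simp
  have k': "1 \<le> leaves t - 1 + k" "leaves t - 1 + k \<le> leaves (glast t S)" using lt lg assms(3,4) by auto
  have "add_caret d (leaves (Nd ts) - 1 + k) (glast (Nd ts) S)
      = Nd (add_caret_list d (sum_list (map leaves xs) + (leaves t - 1 + k)) (xs @ [glast t S]))"
    unfolding eq using ts by (simp only: glast.simps glasts_snoc add_caret.simps)
  also have "\<dots> = Nd (xs @ add_caret_list d (leaves t - 1 + k) [glast t S])"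
    using add_caret_list_prefix[OF k'(1)] by simp
  also have "\<dots> = Nd (xs @ [glast t (add_caret d k S)])"
    using add_caret_list_single[OF k'(2)] IH by simp
  also have "\<dots> = glast (Nd ts) (add_caret d k S)" using ts by (simp add: glasts_snoc)
  finally show ?case .
qed

lemma delta_r_snoc: "delta_r (Nd (ys @ [u])) = 1 + delta_r u"
  by (cases ys) auto

lemma add_caret_glast_left:
  assumes "0 < d" "dary d U" "dary d S" "1 \<le> k" "k < leaves U"
  shows "add_caret d k (glast U S) = glast (add_caret d k U) S"
  using assms(2,4,5)
proof (induction U arbitrary: k)
  case Lf then show ?case by simp
next
  case (Nd ts)
  obtain xs t where ts: "ts = xs @ [t]" using dary_nonempty[OF assms(1) Nd.prems(1)] by blast
  have dt: "dary d t" using Nd.prems ts by simp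
  have lt: "1 \<le> leaves t" using leaves_pos[OF assms(1) dt] by simp
  have lg: "leaves (glast t S) + 1 = leaves t + leaves S" using glast_props[OF assms(1) dt assms(3)] by simp
  have lS: "1 \<le> leaves S" using leaves_pos[OF assms(1) assms(3)] by simp
  show ?case
  proof (cases "k \<le> sum_list (map leaves xs)")
    case True
    then show ?thesis using ts by (simp add: glasts_snoc add_caret_list_append length_add_caret_list)
  next
    case False
    define k' where "k' = k - sum_list (map leaves xs)"
    have k': "1 \<le> k'" "k' < leaves t" "k' \<le> leaves (glast t S)" using False Nd.prems(3) ts lg lS
      by (auto simp: k'_def)
    have IH: "add_caret d k' (glast t S) = glast (add_caret d k' t) S" using Nd.IH[of t k'] dt ts k' by simp
    show ?thesis using ts False k' IH
      by (simp add: glasts_snoc add_caret_list_append k'_def[symmetric])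
  qed
qed

inductive crel :: "nat \<Rightarrow> dtree \<Rightarrow> dtree \<Rightarrow> bool" for d where
  crel_refl: "crel d A A"
| crel_step: "crel d A B \<Longrightarrow> 1 \<le> k \<Longrightarrow> k \<le> leaves B \<Longrightarrow> crel d A (add_caret d k B)"

inductive nlr :: "nat \<Rightarrow> dtree \<Rightarrow> dtree \<Rightarrow> bool" for d where
  nlr_refl: "nlr d A A"
| nlr_step: "nlr d A B \<Longrightarrow> 1 \<le> k \<Longrightarrow> k < leaves B \<Longrightarrow> nlr d A (add_caret d k B)"

lemma crel_trans: "crel d B C \<Longrightarrow> crel d A B \<Longrightarrow> crel d A C"
  by (induction rule: crel.induct) (auto intro: crel_step)

lemma nlr_trans: "nlr d B C \<Longrightarrow> nlr d A B \<Longrightarrow> nlr d A C"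
  by (induction rule: nlr.induct) (auto intro: nlr_step)

lemma crel_nodes: "0 < d \<Longrightarrow> dary d A \<Longrightarrow> dary d B \<Longrightarrow> nodes A \<subseteq> nodes B \<Longrightarrow> crel d A B"
proof (induction "card (nodes B - nodes A)" arbitrary: A rule: less_induct)
  case less
  show ?case
  proof (cases "nodes A = nodes B")
    case True
    then have "A = B" using nodes_inj[OF less(3) less(4)] by simp
    then show ?thesis by (simp add: crel_refl)
  next
    case False
    then have "nodes A \<subset> nodes B" using less by auto
    then obtain a where a: "a \<in> set (laddr A)" "a \<in> nodes B"
      using nodes_step[OF less(3) less(4)] by blast
    then obtain i where i: "i < length (laddr A)" "a = laddr A ! i"
      by (auto simp: in_set_conv_nth)
    let ?A1 = "add_caret d (Suc i) A"
    have k: "1 \<le> Suc i" "Suc i \<le> leaves A" using i by (auto simp: length_laddr)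
    have n1: "nodes ?A1 = insert a (nodes A)" using k i by (simp add: nodes_add_caret)
    have na: "a \<notin> nodes A" using laddr_not_nodes[OF a(1)] .
    have "card (nodes B - nodes ?A1) < card (nodes B - nodes A)"
      using card_diff_less[of "nodes A" "nodes ?A1" "nodes B"] n1 na a(2) less(5) finite_nodes(1)
      by auto
    moreover have "dary d ?A1" using less(3) by (rule dary_add_caret)
    moreover have "nodes ?A1 \<subseteq> nodes B" using n1 a(2) less(5) by auto
    ultimately have "crel d ?A1 B" using less(1) less(2) less(4) by blast
    moreover have "crel d A ?A1" using crel_step[OF crel_refl k] .
    ultimately show ?thesis by (rule crel_trans)
  qed
qed

lemma nlr_ctx_last: "nlr d P Q \<Longrightarrow> nlr d (Nd (xs @ [P])) (Nd (xs @ [Q]))"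
proof (induction rule: nlr.induct)
  case nlr_refl then show ?case by (simp add: nlr.nlr_refl)
next
  case (nlr_step A' B k)
  have "add_caret d (sum_list (map leaves xs) + k) (Nd (xs @ [B])) = Nd (xs @ [add_caret d k B])"
    using nlr_step by (simp add: add_caret_list_prefix)
  moreover have "sum_list (map leaves xs) + k < leaves (Nd (xs @ [B]))" using nlr_step by simp
  ultimately show ?case using nlr.nlr_step[OF nlr_step(4), of "sum_list (map leaves xs) + k"] nlr_step(2)
    by simp
qed

lemma nlr_ctx_mid: "crel d A B \<Longrightarrow> 1 \<le> sum_list (map leaves ys) \<Longrightarrow> nlr d (Nd (xs @ A # ys)) (Nd (xs @ B # ys))"
proof (induction rule: crel.induct)
  case crel_refl then show ?case by (simp add: nlr.nlr_refl)
next
  case (crel_step A' B k)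
  have "add_caret d (sum_list (map leaves xs) + k) (Nd (xs @ B # ys)) = Nd (xs @ add_caret d k B # ys)"
    using crel_step by (simp add: add_caret_list_prefix)
  moreover have "sum_list (map leaves xs) + k < leaves (Nd (xs @ B # ys))" using crel_step by simp
  ultimately show ?case using nlr.nlr_step[OF crel_step(4), of "sum_list (map leaves xs) + k"] crel_step(2,5)
    by simp
qed

lemma nlr_fill: "\<forall>x\<in>set xs. dary d x \<Longrightarrow> 0 < d \<Longrightarrow> 1 \<le> sum_list (map leaves ys) \<Longrightarrow>
   nlr d (Nd (pre @ replicate (length xs) Lf @ ys)) (Nd (pre @ xs @ ys))"
proof (induction xs arbitrary: pre)
  case Nil then show ?case by (simp add: nlr.nlr_refl)
next
  case (Cons x xs)
  have "crel d Lf x" using crel_nodes[OF Cons.prems(2)] Cons.prems(1) by simp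
  then have s1: "nlr d (Nd (pre @ Lf # (replicate (length xs) Lf @ ys))) (Nd (pre @ x # (replicate (length xs) Lf @ ys)))"
    using nlr_ctx_mid Cons.prems(3) by simp
  have s2: "nlr d (Nd ((pre @ [x]) @ replicate (length xs) Lf @ ys)) (Nd ((pre @ [x]) @ xs @ ys))"
    using Cons.IH[of "pre @ [x]"] Cons.prems by simp
  show ?case using nlr_trans[OF s2] s1 by simp
qed

lemma nlr_rc: "0 < d \<Longrightarrow> dary d U \<Longrightarrow> nlr d (rc d (delta_r U) Lf) U"
proof (induction U)
  case Lf then show ?case by (simp add: nlr.nlr_refl)
next
  case (Nd ts)
  obtain xs t where ts: "ts = xs @ [t]" using dary_nonempty[OF Nd.prems] by blast
  have dt: "dary d t" using Nd.prems ts by simp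
  have len: "length xs = d - 1" using Nd.prems ts by auto
  have IH: "nlr d (rc d (delta_r t) Lf) t" using Nd.IH[of t] ts dt Nd.prems(1) by simp
  have s1: "nlr d (Nd (replicate (d - 1) Lf @ [rc d (delta_r t) Lf])) (Nd (replicate (d - 1) Lf @ [t]))"
    using nlr_ctx_last[OF IH] .
  have lt: "1 \<le> sum_list (map leaves [t])" using leaves_pos[OF Nd.prems(1) dt] by simp
  have ax: "\<forall>x\<in>set xs. dary d x" using Nd.prems ts by simp
  have s2: "nlr d (Nd ([] @ replicate (length xs) Lf @ [t])) (Nd ([] @ xs @ [t]))"
    by (rule nlr_fill[OF ax Nd.prems(1) lt])
  have s2': "nlr d (Nd (replicate (d - 1) Lf @ [t])) (Nd (xs @ [t]))" using s2 len by simp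
  show ?case using nlr_trans[OF s2' s1] ts by (simp add: delta_r_snoc)
qed
text \<open>depth invariant\<close>

definition dep :: "dtree \<Rightarrow> nat list" where "dep t = map length (laddr t)"

definition dl :: "nat list \<Rightarrow> nat list \<Rightarrow> int set" where
  "dl xs ys = (\<lambda>(a, b). int a - int b) ` set (zip xs ys)"

definition dset :: "dtree \<Rightarrow> dtree \<Rightarrow> int set" where "dset A B = dl (dep A) (dep B)"

lemma length_dep: "length (dep t) = leaves t"
  by (simp add: dep_def length_laddr)

lemma dep_laddrs: "map length (laddrs i ts) = concat (map (\<lambda>t. map Suc (dep t)) ts)"
  by (induction ts arbitrary: i) (auto simp: dep_def)

lemma dep_Lf[simp]: "dep Lf = [0]" by (simp add: dep_def)

lemma dep_Nd[simp]: "dep (Nd ts) = concat (map (\<lambda>t. map Suc (dep t)) ts)"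
  by (simp add: dep_def dep_laddrs)

lemma concat_rep_single[simp]: "concat (replicate m [x]) = replicate m x"
  by (induction m) auto

lemma dl_append: "length xs = length ys \<Longrightarrow> dl (xs @ xs') (ys @ ys') = dl xs ys \<union> dl xs' ys'"
  by (simp add: dl_def image_Un)

lemma dl_map_Suc: "dl (map Suc xs) (map Suc ys) = dl xs ys"
  by (simp add: dl_def zip_map_map image_image split_def)

lemma dl_rep: "dl (replicate m a) (replicate m b) = (if m = 0 then {} else {int a - int b})"
  by (simp add: dl_def)

lemma dl_single: "dl [a] [b] = {int a - int b}"
  by (simp add: dl_def)

lemma dep_add_caret:
  assumes "1 \<le> k" "k \<le> leaves t"
  shows "dep (add_caret d k t) = take (k - 1) (dep t) @ replicate d (dep t ! (k - 1) + 1) @ drop k (dep t)"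
proof -
  have "k - 1 < length (laddr t)" using assms by (simp add: length_laddr)
  then show ?thesis using assms
    by (simp add: dep_def laddr_add_caret take_map drop_map map_replicate_const o_def)
qed

lemma dset_add_caret:
  assumes "0 < d" "leaves A = leaves B" "1 \<le> k" "k \<le> leaves B"
  shows "dset (add_caret d k A) (add_caret d k B) = dset A B"
proof -
  let ?xs = "dep A" and ?ys = "dep B" and ?i = "k - 1"
  have len: "length ?xs = length ?ys" "?i < length ?xs" using assms by (auto simp: length_dep)
  have "dset (add_caret d k A) (add_caret d k B) =
      dl (take ?i ?xs) (take ?i ?ys) \<union> dl (replicate d (?xs ! ?i + 1)) (replicate d (?ys ! ?i + 1))
        \<union> dl (drop k ?xs) (drop k ?ys)"
    using assms len by (simp add: dset_def dep_add_caret dl_append Un_assoc)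
  also have "\<dots> = dl (take ?i ?xs) (take ?i ?ys) \<union> dl [?xs ! ?i] [?ys ! ?i] \<union> dl (drop k ?xs) (drop k ?ys)"
    using assms by (simp add: dl_rep dl_single)
  also have "\<dots> = dl (take ?i ?xs @ [?xs ! ?i] @ drop k ?xs) (take ?i ?ys @ [?ys ! ?i] @ drop k ?ys)"
    using len dl_append[of "[?xs ! ?i]" "[?ys ! ?i]" "drop k ?xs" "drop k ?ys"] by (simp add: dl_append Un_assoc)
  also have "take ?i ?xs @ [?xs ! ?i] @ drop k ?xs = ?xs" using id_take_nth_drop[OF len(2)] assms by simp
  also have "take ?i ?ys @ [?ys ! ?i] @ drop k ?ys = ?ys" using id_take_nth_drop[of ?i ?ys] len assms by simp
  finally show ?thesis by (simp add: dset_def)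
qed

lemma dset_ctx_last:
  assumes "leaves P = leaves Q"
  shows "dset (Nd (replicate m Lf @ [P])) (Nd (replicate m Lf @ [Q])) = (if m = 0 then dset P Q else insert 0 (dset P Q))"
  using assms by (simp add: dset_def dl_append dl_map_Suc dl_rep length_dep map_replicate)

lemma dset_ctx_first:
  assumes "leaves P = leaves Q"
  shows "dset (Nd (P # replicate m Lf)) (Nd (Q # replicate m Lf)) = (if m = 0 then dset P Q else insert 0 (dset P Q))"
  using assms dl_append[of "map Suc (dep P)" "map Suc (dep Q)" "replicate m 1" "replicate m 1"]
  by (auto simp: dset_def dl_map_Suc dl_rep length_dep map_replicate)

definition car :: "nat \<Rightarrow> dtree" where "car d = Nd (replicate d Lf)"
definition X1 :: "nat \<Rightarrow> dtree" where "X1 d = Nd (car d # replicate (d - 1) Lf)"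
definition Xd :: "nat \<Rightarrow> dtree" where "Xd d = Nd (replicate (d - 1) Lf @ [car d])"
definition wn :: "nat \<Rightarrow> nat \<Rightarrow> dtree \<Rightarrow> dtree" where "wn d n Z = rc d n (Nd (Z # replicate (d - 1) Lf))"

lemma dset_wn:
  assumes "2 \<le> d" "leaves P = leaves Q"
  shows "dset (wn d n P) (wn d n Q) = insert 0 (dset P Q)"
proof (induction n)
  case 0
  show ?case using dset_ctx_first[OF assms(2), of "d - 1"] assms(1) by (simp add: wn_def)
next
  case (Suc n)
  have l: "leaves (rc d n (Nd (P # replicate (d - 1) Lf))) = leaves (rc d n (Nd (Q # replicate (d - 1) Lf)))"
    using assms by (simp add: leaves_rc)
  show ?case using dset_ctx_last[OF l, of "d - 1"] Suc assms(1) by (simp add: wn_def)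
qed
context
  fixes d :: nat
  assumes d2: "2 \<le> d"
begin

lemma dl_Cons[simp]: "dl (a # xs) (b # ys) = insert (int a - int b) (dl xs ys)"
  by (simp add: dl_def)

lemma rep_split: "0 < m \<Longrightarrow> replicate m x = replicate (m - 1) x @ [x]"
  by (cases m) (auto simp: replicate_append_same)

lemma rep_split': "0 < m \<Longrightarrow> replicate m x = x # replicate (m - 1) x"
  by (cases m) auto

lemma leaves_car[simp]: "leaves (car d) = d" by (simp add: car_def)
lemma leaves_X1[simp]: "leaves (X1 d) = 2 * d - 1" using d2 by (simp add: X1_def)
lemma leaves_Xd[simp]: "leaves (Xd d) = 2 * d - 1" using d2 by (simp add: Xd_def)

lemma car1: "add_caret d 1 (car d) = X1 d"
  using d2 by (simp add: car_def X1_def add_caret_list_rep)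

lemma card': "add_caret d d (car d) = Xd d"
  using d2 by (simp add: car_def Xd_def add_caret_list_rep)

lemma F1: "add_caret d d (X1 d) = Nd (Xd d # replicate (d - 1) Lf)"
  using d2 card' by (simp add: X1_def)

lemma F2: "add_caret d d (Xd d) = rc d 1 (X1 d)"
proof -
  have "add_caret d d (Xd d) = Nd (add_caret_list d (sum_list (map leaves (replicate (d - 1) Lf)) + 1) (replicate (d - 1) Lf @ [car d]))"
    using d2 by (simp add: Xd_def)
  also have "\<dots> = Nd (replicate (d - 1) Lf @ add_caret_list d 1 [car d])" by (rule arg_cong[where f=Nd], rule add_caret_list_prefix) simp
  also have "\<dots> = rc d 1 (X1 d)" using car1 d2 by simp
  finally show ?thesis .
qed

lemma F3: "add_caret d (2 * d - 1) (X1 d) = Nd (car d # replicate (d - 2) Lf @ [car d])"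
proof -
  have a: "\<not> 2 * d - 1 \<le> d" "2 * d - 1 - d = d - 1" using d2 by auto
  have "add_caret d (2 * d - 1) (X1 d) = Nd (car d # add_caret_list d (d - 1) (replicate (d - 1) Lf))"
    using a by (simp add: X1_def)
  also have "\<dots> = Nd (car d # replicate (d - 2) Lf @ [car d])"
    using d2 by (simp add: add_caret_list_rep car_def add_caret_0)
  finally show ?thesis .
qed

lemma F4: "add_caret d (3 * d - 2) (Nd (car d # replicate (d - 2) Lf @ [car d])) = Nd (car d # replicate (d - 2) Lf @ [Xd d])"
proof -
  have e: "3 * d - 2 = sum_list (map leaves (car d # replicate (d - 2) Lf)) + d" using d2 by simp
  have "add_caret d (3 * d - 2) (Nd (car d # replicate (d - 2) Lf @ [car d])) =
     Nd (add_caret_list d (sum_list (map leaves (car d # replicate (d - 2) Lf)) + d) ((car d # replicate (d - 2) Lf) @ [car d]))"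
    unfolding e by simp
  also have "\<dots> = Nd ((car d # replicate (d - 2) Lf) @ add_caret_list d d [car d])"
    using d2 by (subst add_caret_list_prefix) auto
  also have "\<dots> = Nd (car d # replicate (d - 2) Lf @ [Xd d])" using card' by simp
  finally show ?thesis .
qed

lemma F5: "add_caret d (2 * d - 1) (Xd d) = rc d 1 (Xd d)"
proof -
  have e: "2 * d - 1 = sum_list (map leaves (replicate (d - 1) Lf)) + d" using d2 by simp
  have "add_caret d (2 * d - 1) (Xd d) = Nd (add_caret_list d (sum_list (map leaves (replicate (d - 1) Lf)) + d) (replicate (d - 1) Lf @ [car d]))"
    unfolding e by (simp add: Xd_def)
  also have "\<dots> = Nd (replicate (d - 1) Lf @ add_caret_list d d [car d])"
    using d2 by (subst add_caret_list_prefix) auto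
  also have "\<dots> = rc d 1 (Xd d)" using card' by simp
  finally show ?thesis .
qed

lemma F6: "add_caret d (3 * d - 2) (rc d 1 (Xd d)) = rc d 2 (Xd d)"
proof -
  have e: "3 * d - 2 = 1 * (d - 1) + (2 * d - 1)" using d2 by simp
  show ?thesis unfolding e using add_caret_rc[of "2 * d - 1" "Xd d" d 1] F5 d2
    by (simp add: numeral_2_eq_2)
qed

lemma F7: "add_caret d 1 (rc d 1 S) = Nd (car d # replicate (d - 2) Lf @ [S])"
proof -
  have "replicate (d - 1) Lf = Lf # replicate (d - 2) Lf" using d2 rep_split'[of "d - 1" Lf] by simp
  then show ?thesis by (simp add: car_def)
qed

lemma F9: "1 \<le> k \<Longrightarrow> k \<le> leaves Z \<Longrightarrow> add_caret d (n * (d - 1) + k) (wn d n Z) = wn d n (add_caret d k Z)"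
  unfolding wn_def by (subst add_caret_rc) simp_all

lemma leaves_wn: "leaves (wn d n Z) = n * (d - 1) + leaves Z + (d - 1)"
  by (simp add: wn_def leaves_rc)

lemma dary_car: "dary d (car d)" by (simp add: car_def)
lemma dary_X1: "dary d (X1 d)" using d2 by (simp add: X1_def car_def)
lemma dary_Xd: "dary d (Xd d)" using d2 by (simp add: Xd_def car_def)

lemma dary_wn: "dary d Z \<Longrightarrow> dary d (wn d n Z)"
  using d2 by (auto simp: wn_def intro!: dary_rc)

lemma delta_r_wn: "delta_r (wn d n Z) = Suc n"
proof -
  have "Z # replicate (d - 1) Lf = (Z # replicate (d - 2) Lf) @ [Lf]"
    using d2 rep_split[of "d - 1" Lf] by simp
  then show ?thesis by (simp add: wn_def delta_r_rc delta_r_snoc)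
qed

lemma dep_car: "dep (car d) = replicate d 1" by (simp add: car_def map_replicate_const)

lemma dep_Xd: "dep (Xd d) = replicate (d - 1) 1 @ replicate d 2"
  by (simp add: Xd_def dep_car map_replicate_const)

lemma dep_X1: "dep (X1 d) = replicate d 2 @ replicate (d - 1) 1"
  by (simp add: X1_def dep_car map_replicate_const)

lemma ab_no: "- 1 \<notin> dset (Nd (Xd d # replicate (d - 1) Lf)) (rc d 1 (Xd d))"
proof -
  have l1: "dep (Nd (Xd d # replicate (d - 1) Lf)) =
     replicate (d - 1) 2 @ replicate (d - 1) 3 @ [3] @ replicate (d - 1) 1"
    using d2 by (simp add: dep_Xd map_replicate_const rep_split[of d 3])
  have l2: "dep (rc d 1 (Xd d)) = replicate (d - 1) 1 @ replicate (d - 1) 2 @ [3] @ replicate (d - 1) 3"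
    using d2 by (simp add: dep_Xd map_replicate_const rep_split'[of d 3])
  show ?thesis unfolding dset_def l1 l2 using d2
    by (simp add: dl_append dl_rep dl_single)
qed

lemma ba_yes: "- 1 \<in> dset (Nd (car d # replicate (d - 2) Lf @ [X1 d])) (rc d 2 (Xd d))"
proof -
  have l1: "dep (Nd (car d # replicate (d - 2) Lf @ [X1 d])) =
     (replicate d 2 @ replicate (d - 2) 1 @ replicate (d - 1) 3) @ [3] @ replicate (d - 1) 2"
    using d2 by (simp add: dep_X1 dep_car map_replicate_const rep_split[of d 3])
  have l2: "dep (rc d 2 (Xd d)) = (replicate (d - 1) 1 @ replicate (d - 1) 2 @ replicate (d - 1) 3) @ [4] @ replicate (d - 1) 4"
  proof -
    have r: "rc d 2 (Xd d) = rc d (Suc (Suc 0)) (Xd d)" by (simp add: numeral_2_eq_2)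
    show ?thesis unfolding r using d2 by (simp add: dep_Xd map_replicate_const rep_split'[of d 4])
  qed
  have len: "length (replicate d 2 @ replicate (d - 2) (1::nat) @ replicate (d - 1) 3) =
      length (replicate (d - 1) 1 @ replicate (d - 1) (2::nat) @ replicate (d - 1) 3)" using d2 by simp
  show ?thesis unfolding dset_def l1 l2 using dl_append[OF len] by (simp add: dl_single)
qed

end

locale CS =
  fixes d :: nat and G :: "nat \<Rightarrow> 'g monoid" and \<rho> :: "nat \<Rightarrow> 'g \<Rightarrow> nat \<Rightarrow> nat"
    and \<kappa> :: "nat \<Rightarrow> nat \<Rightarrow> 'g \<Rightarrow> 'g"
  assumes d2: "d \<ge> 2"
    and cs: "cloning_system d G \<rho> \<kappa>"
    and fc: "fully_compatible d G \<rho> \<kappa>"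
    and sp: "slightly_pure G \<rho>"
    and un: "uniform d G \<kappa>"
begin

lemma cs1: "\<forall>n\<ge>1. group (G n) \<and> \<rho> n \<in> hom (G n) (sym_group n)"
  using cs unfolding cloning_system_def by (elim conjE)
lemma cs2: "\<forall>n\<ge>1. \<forall>k\<in>{1..n}. \<kappa> n k \<in> carrier (G n) \<rightarrow> carrier (G (n + d - 1))
                        \<and> inj_on (\<kappa> n k) (carrier (G n))"
  using cs unfolding cloning_system_def by (elim conjE)
lemma cs3: "\<forall>n\<ge>1. \<forall>k\<in>{1..n}. \<forall>g\<in>carrier (G n). \<forall>h\<in>carrier (G n).
        \<kappa> n k (g \<otimes>\<^bsub>G n\<^esub> h) = \<kappa> n (\<rho> n h k) g \<otimes>\<^bsub>G (n + d - 1)\<^esub> \<kappa> n k h"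
  using cs unfolding cloning_system_def by (elim conjE)
lemma cs4: "\<forall>n\<ge>1. \<forall>k l. 1 \<le> k \<and> k < l \<and> l \<le> n \<longrightarrow> (\<forall>g\<in>carrier (G n).
        \<kappa> (n + d - 1) k (\<kappa> n l g) = \<kappa> (n + d - 1) (l + d - 1) (\<kappa> n k g))"
  using cs unfolding cloning_system_def by (elim conjE)

lemma grp: "1 \<le> n \<Longrightarrow> group (G n)"
  using cs1 by simp

lemma rho_hom: "1 \<le> n \<Longrightarrow> \<rho> n \<in> hom (G n) (sym_group n)"
  using cs1 by simp

lemma rho_perm: "1 \<le> n \<Longrightarrow> g \<in> carrier (G n) \<Longrightarrow> \<rho> n g permutes {1..n}"
  using hom_in_carrier[OF rho_hom] sym_group_carrier by blast

lemma rho_mult: "1 \<le> n \<Longrightarrow> g \<in> carrier (G n) \<Longrightarrow> h \<in> carrier (G n) \<Longrightarrow>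
    \<rho> n (g \<otimes>\<^bsub>G n\<^esub> h) = \<rho> n g \<circ> \<rho> n h"
  using hom_mult[OF rho_hom] by (simp add: sym_group_mult)

lemma rho_one: "1 \<le> n \<Longrightarrow> \<rho> n \<one>\<^bsub>G n\<^esub> = id"
  using hom_one[OF rho_hom grp sym_group_is_group] by (simp add: sym_group_one)

lemma kappa_closed: "1 \<le> n \<Longrightarrow> k \<in> {1..n} \<Longrightarrow> g \<in> carrier (G n) \<Longrightarrow> \<kappa> n k g \<in> carrier (G (n + d - 1))"
proof -
  assume a: "1 \<le> n" "k \<in> {1..n}" "g \<in> carrier (G n)"
  then have "\<kappa> n k \<in> carrier (G n) \<rightarrow> carrier (G (n + d - 1))" using cs2 by simp
  then show ?thesis using a(3) by (rule funcset_mem)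
qed

lemma kappa_inj: "1 \<le> n \<Longrightarrow> k \<in> {1..n} \<Longrightarrow> inj_on (\<kappa> n k) (carrier (G n))"
  using cs2 by simp

lemma C1: "1 \<le> n \<Longrightarrow> k \<in> {1..n} \<Longrightarrow> g \<in> carrier (G n) \<Longrightarrow> h \<in> carrier (G n) \<Longrightarrow>
        \<kappa> n k (g \<otimes>\<^bsub>G n\<^esub> h) = \<kappa> n (\<rho> n h k) g \<otimes>\<^bsub>G (n + d - 1)\<^esub> \<kappa> n k h"
  using cs3 by simp

lemma C2: "1 \<le> n \<Longrightarrow> 1 \<le> k \<Longrightarrow> k < l \<Longrightarrow> l \<le> n \<Longrightarrow> g \<in> carrier (G n) \<Longrightarrow>
        \<kappa> (n + d - 1) k (\<kappa> n l g) = \<kappa> (n + d - 1) (l + d - 1) (\<kappa> n k g)"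
  using cs4 by simp

lemma FC: "1 \<le> n \<Longrightarrow> k \<in> {1..n} \<Longrightarrow> g \<in> carrier (G n) \<Longrightarrow>
        \<rho> (n + d - 1) (\<kappa> n k g) i = clone_perm d k (\<rho> n g) i"
  using fc unfolding fully_compatible_def by simp

lemma SP: "1 \<le> n \<Longrightarrow> g \<in> carrier (G n) \<Longrightarrow> \<rho> n g n = n"
  using sp unfolding slightly_pure_def by simp

lemma UN: "1 \<le> n \<Longrightarrow> k \<in> {1..n} \<Longrightarrow> k \<le> l \<Longrightarrow> l \<le> l' \<Longrightarrow> l' \<le> k + d - 1 \<Longrightarrow> g \<in> carrier (G n) \<Longrightarrow>
       \<kappa> (n + d - 1) l (\<kappa> n k g) = \<kappa> (n + d - 1) l' (\<kappa> n k g)"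
  using un unfolding uniform_def by simp

lemma kappa_one: "1 \<le> n \<Longrightarrow> k \<in> {1..n} \<Longrightarrow> \<kappa> n k \<one>\<^bsub>G n\<^esub> = \<one>\<^bsub>G (n + d - 1)\<^esub>"
proof -
  assume n: "1 \<le> n" and k: "k \<in> {1..n}"
  interpret g1: group "G n" using grp n .
  have n': "1 \<le> n + d - 1" using n d2 by simp
  interpret g2: group "G (n + d - 1)" using grp n' .
  have c: "\<kappa> n k \<one>\<^bsub>G n\<^esub> \<in> carrier (G (n + d - 1))" using kappa_closed n k by simp
  have "\<kappa> n k \<one>\<^bsub>G n\<^esub> = \<kappa> n k (\<one>\<^bsub>G n\<^esub> \<otimes>\<^bsub>G n\<^esub> \<one>\<^bsub>G n\<^esub>)" by simp
  also have "\<dots> = \<kappa> n (\<rho> n \<one>\<^bsub>G n\<^esub> k) \<one>\<^bsub>G n\<^esub> \<otimes>\<^bsub>G (n + d - 1)\<^esub> \<kappa> n k \<one>\<^bsub>G n\<^esub>"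
    by (rule C1[OF n k]) simp_all
  also have "\<dots> = \<kappa> n k \<one>\<^bsub>G n\<^esub> \<otimes>\<^bsub>G (n + d - 1)\<^esub> \<kappa> n k \<one>\<^bsub>G n\<^esub>"
    using rho_one[OF n] by simp
  finally show ?thesis using c g2.l_cancel_one'[OF c c] by simp
qed

definition ex :: "'g triple \<Rightarrow> nat \<Rightarrow> 'g triple" where
  "ex x k = (case x of (T, g, U) \<Rightarrow> (add_caret d (\<rho> (leaves U) g k) T, \<kappa> (leaves U) k g, add_caret d k U))"

definition mid :: "'g triple \<Rightarrow> dtree" where "mid x = snd (snd x)"

abbreviation "valid \<equiv> valid_triple d G"
abbreviation "exp \<equiv> expansion d G \<rho> \<kappa>"

lemma exp_iff: "exp x y \<longleftrightarrow> valid x \<and> (\<exists>k\<in>{1..leaves (mid x)}. y = ex x k)"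
  by (cases x) (auto simp: expansion_def ex_def mid_def)

lemma valid_leaves: "valid (T, g, U) \<Longrightarrow> 1 \<le> leaves U"
  using leaves_pos[of d U] d2 by (auto simp: valid_triple_def)

lemma valid_ex: "valid x \<Longrightarrow> k \<in> {1..leaves (mid x)} \<Longrightarrow> valid (ex x k)"
proof (cases x)
  case (fields T g U)
  assume v: "valid x" and k: "k \<in> {1..leaves (mid x)}"
  have n: "1 \<le> leaves U" using v fields valid_leaves by simp
  have vx: "dary d T" "dary d U" "leaves T = leaves U" "g \<in> carrier (G (leaves U))"
    using v fields by (auto simp: valid_triple_def)
  have p: "\<rho> (leaves U) g k \<in> {1..leaves T}"
    using permutes_in_image[OF rho_perm[OF n vx(4)]] k fields vx(3) by (simp add: mid_def)
  show ?thesis using vx p k n fields kappa_closed[OF n _ vx(4), of k]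
    by (auto simp: ex_def valid_triple_def mid_def leaves_add_caret dary_add_caret)
qed

lemma mid_ex: "mid (ex x k) = add_caret d k (mid x)"
  by (cases x) (simp add: ex_def mid_def)

lemma exp_ex: "valid x \<Longrightarrow> k \<in> {1..leaves (mid x)} \<Longrightarrow> exp x (ex x k)"
  by (auto simp: exp_iff)

lemma diamond:
  assumes v: "valid x" and kl: "1 \<le> k" "k < l" "l \<le> leaves (mid x)"
  shows "ex (ex x k) (l + d - 1) = ex (ex x l) k"
proof (cases x)
  case (fields T g U)
  have n: "1 \<le> leaves U" using v fields valid_leaves by simp
  have vx: "dary d T" "dary d U" "leaves T = leaves U" "g \<in> carrier (G (leaves U))"
    using v fields by (auto simp: valid_triple_def)
  let ?n = "leaves U"
  let ?s = "\<rho> ?n g"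
  have perm: "?s permutes {1..?n}" using rho_perm[OF n vx(4)] .
  have sk: "?s k \<in> {1..?n}" "?s l \<in> {1..?n}" using permutes_in_image[OF perm] kl fields by (auto simp: mid_def)
  have ne: "?s k \<noteq> ?s l" using permutes_inj[OF perm] kl by (metis injD less_irrefl)
  have lU: "leaves (add_caret d k U) = ?n + d - 1" "leaves (add_caret d l U) = ?n + d - 1"
    using kl fields by (auto simp: leaves_add_caret mid_def)
  have kin: "k \<in> {1..?n}" "l \<in> {1..?n}" using kl fields by (auto simp: mid_def)
  have r1: "\<rho> (?n + d - 1) (\<kappa> ?n k g) (l + d - 1) = (if ?s l < ?s k then ?s l else ?s l + (d - 1))"
  proof -
    have a: "\<not> l + d - 1 < k" "\<not> l + d - 1 < k + d" "l + d - 1 - (d - 1) = l" using kl d2 by auto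
    show ?thesis using FC[OF n kin(1) vx(4), where i="l+d-1"] a by (simp only: clone_perm_def Let_def if_False)
  qed
  have r2: "\<rho> (?n + d - 1) (\<kappa> ?n l g) k = (if ?s k < ?s l then ?s k else ?s k + (d - 1))"
    using FC[OF n kin(2) vx(4), where i=k] kl by (simp add: clone_perm_def Let_def)
  have T: "add_caret d (if ?s l < ?s k then ?s l else ?s l + (d - 1)) (add_caret d (?s k) T) =
        add_caret d (if ?s k < ?s l then ?s k else ?s k + (d - 1)) (add_caret d (?s l) T)"
  proof (cases "?s k < ?s l")
    case True
    then show ?thesis using add_caret_comm[OF vx(1), of "?s k" "?s l"] sk vx(3) d2 by auto
  next
    case False
    then have "?s l < ?s k" using ne by simp
    then show ?thesis using add_caret_comm[OF vx(1), of "?s l" "?s k"] sk vx(3) d2 by auto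
  qed
  have U: "add_caret d (l + d - 1) (add_caret d k U) = add_caret d k (add_caret d l U)"
    using add_caret_comm[OF vx(2), of k l] kl fields d2 by (simp add: mid_def)
  have K: "\<kappa> (?n + d - 1) (l + d - 1) (\<kappa> ?n k g) = \<kappa> (?n + d - 1) k (\<kappa> ?n l g)"
    using C2[OF n kl(1,2) _ vx(4)] kin by simp
  show ?thesis using fields T U K r1 r2 lU by (simp add: ex_def)
qed


lemma valid_exp: "exp x y \<Longrightarrow> valid y"
  by (auto simp: exp_iff valid_ex)

lemma valid_rtc: "exp\<^sup>*\<^sup>* x y \<Longrightarrow> valid x \<Longrightarrow> valid y"
  by (induction rule: rtranclp_induct) (auto intro: valid_exp)

lemma valid_equiv: "equivclp exp x y \<Longrightarrow> valid x \<Longrightarrow> valid y"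
proof (induction rule: equivclp_induct)
  case base then show ?case .
next
  case (step y z)
  from step(2) show ?case
  proof
    assume "exp y z" then show ?thesis by (rule valid_exp)
  next
    assume "exp z y" then show ?thesis unfolding exp_iff by blast
  qed
qed

lemma leaves_mid_ex: "valid x \<Longrightarrow> k \<in> {1..leaves (mid x)} \<Longrightarrow> leaves (mid (ex x k)) = leaves (mid x) + d - 1"
  by (simp add: mid_ex leaves_add_caret)

lemma exp_D: "exp x y \<Longrightarrow> exp x z \<Longrightarrow> y = z \<or> (\<exists>w. exp y w \<and> exp z w)"
proof -
  assume "exp x y" "exp x z"
  then obtain k l where v: "valid x" and k: "k \<in> {1..leaves (mid x)}" "y = ex x k"
    and l: "l \<in> {1..leaves (mid x)}" "z = ex x l" by (auto simp: exp_iff)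
  have vy: "valid y" "valid z" using v k l valid_ex by auto
  consider "k = l" | "k < l" | "l < k" by arith
  then show ?thesis
  proof cases
    case 1 then show ?thesis using k l by simp
  next
    case 2
    have "exp y (ex y (l + d - 1))" using vy k l d2 leaves_mid_ex[OF v k(1)] by (intro exp_ex) auto
    moreover have "exp z (ex z k)" using vy k l d2 leaves_mid_ex[OF v l(1)] by (intro exp_ex) auto
    moreover have "ex y (l + d - 1) = ex z k" using diamond[OF v, of k l] 2 k l by simp
    ultimately show ?thesis by metis
  next
    case 3
    have "exp z (ex z (k + d - 1))" using vy k l d2 leaves_mid_ex[OF v l(1)] by (intro exp_ex) auto
    moreover have "exp y (ex y l)" using vy k l d2 leaves_mid_ex[OF v k(1)] by (intro exp_ex) auto
    moreover have "ex z (k + d - 1) = ex y l" using diamond[OF v, of l k] 3 k l by simp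
    ultimately show ?thesis by metis
  qed
qed

lemma dmd_exp: "dmd exp"
  unfolding dmd_def using exp_D by blast

lemma join: "equivclp exp x y \<longleftrightarrow> (\<exists>w. exp\<^sup>*\<^sup>* x w \<and> exp\<^sup>*\<^sup>* y w)"
proof
  assume "equivclp exp x y" then show "\<exists>w. exp\<^sup>*\<^sup>* x w \<and> exp\<^sup>*\<^sup>* y w"
    using diamond_equiv[OF dmd_exp] by blast
next
  assume "\<exists>w. exp\<^sup>*\<^sup>* x w \<and> exp\<^sup>*\<^sup>* y w"
  then obtain w where "exp\<^sup>*\<^sup>* x w" "exp\<^sup>*\<^sup>* y w" by blast
  then show "equivclp exp x y"
    by (meson converse_rtranclp_into_equivclp equivclp_trans rtranclp_into_equivclp)
qed

lemma nodes_exp: "exp x y \<Longrightarrow> nodes (mid x) \<subset> nodes (mid y)"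
proof -
  assume "exp x y"
  then obtain k where v: "valid x" and k: "k \<in> {1..leaves (mid x)}" "y = ex x k" by (auto simp: exp_iff)
  have "k - 1 < length (laddr (mid x))" using k by (auto simp: length_laddr)
  then have "laddr (mid x) ! (k-1) \<in> set (laddr (mid x))" by simp
  then have "laddr (mid x) ! (k-1) \<notin> nodes (mid x)" by (rule laddr_not_nodes)
  then show ?thesis using k by (auto simp: mid_ex nodes_add_caret)
qed

lemma nodes_rtc: "exp\<^sup>*\<^sup>* x y \<Longrightarrow> nodes (mid x) \<subseteq> nodes (mid y)"
  by (induction rule: rtranclp_induct) (auto dest: nodes_exp)

lemma dary_mid: "valid x \<Longrightarrow> dary d (mid x)"
  by (cases x) (auto simp: valid_triple_def mid_def)

lemma reach: "valid w \<Longrightarrow> dary d V \<Longrightarrow> nodes (mid w) \<subseteq> nodes V \<Longrightarrow> \<exists>w'. exp\<^sup>*\<^sup>* w w' \<and> mid w' = V"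
proof (induction "card (nodes V - nodes (mid w))" arbitrary: w rule: less_induct)
  case less
  show ?case
  proof (cases "nodes (mid w) = nodes V")
    case True
    then have "mid w = V" using nodes_inj[OF dary_mid[OF less(2)] less(3)] by simp
    then show ?thesis by (intro exI[of _ w]) simp
  next
    case False
    then have "nodes (mid w) \<subset> nodes V" using less by auto
    then obtain a where a: "a \<in> set (laddr (mid w))" "a \<in> nodes V"
      using nodes_step[OF dary_mid[OF less(2)] less(3)] by blast
    then obtain i where i: "i < length (laddr (mid w))" "a = laddr (mid w) ! i"
      by (auto simp: in_set_conv_nth)
    let ?w1 = "ex w (Suc i)"
    have k: "Suc i \<in> {1..leaves (mid w)}" using i by (simp add: length_laddr)
    have e: "exp w ?w1" using exp_ex[OF less(2) k] .
    have n1: "nodes (mid ?w1) = insert a (nodes (mid w))" using k i by (simp add: mid_ex nodes_add_caret)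
    have na: "a \<notin> nodes (mid w)" using laddr_not_nodes[OF a(1)] .
    have "card (nodes V - nodes (mid ?w1)) < card (nodes V - nodes (mid w))"
      using card_diff_less[of "nodes (mid w)" "nodes (mid ?w1)" "nodes V"] n1 na a(2) less(4) finite_nodes(1)
      by auto
    moreover have "valid ?w1" using valid_exp[OF e] .
    moreover have "nodes (mid ?w1) \<subseteq> nodes V" using n1 a(2) less(4) by auto
    ultimately obtain w' where w': "exp\<^sup>*\<^sup>* ?w1 w'" "mid w' = V" using less(1) less(3) by blast
    have "exp\<^sup>*\<^sup>* w w'" using e w'(1) by (rule converse_rtranclp_into_rtranclp)
    then show ?thesis using w'(2) by blast
  qed
qed

lemma uniq_aux: "\<forall>x. card (nodes V - nodes (mid x)) = m \<longrightarrow> valid x \<longrightarrow> (\<forall>y z. exp\<^sup>*\<^sup>* x y \<longrightarrow> exp\<^sup>*\<^sup>* x z \<longrightarrow> mid y = V \<longrightarrow> mid z = V \<longrightarrow> y = z)"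
proof (induction m rule: less_induct)
  case (less m)
  show ?case
  proof (intro allI impI)
    fix x y z assume cm: "card (nodes V - nodes (mid x)) = m" and vx: "valid x"
      and xy: "exp\<^sup>*\<^sup>* x y" and xz: "exp\<^sup>*\<^sup>* x z" and my: "mid y = V" and mz: "mid z = V"
    have IH: "y' = z'" if "exp x x1" "exp\<^sup>*\<^sup>* x1 y'" "exp\<^sup>*\<^sup>* x1 z'" "mid y' = V" "mid z' = V" for x1 y' z'
    proof -
      have "nodes (mid x) \<subset> nodes (mid x1)" using nodes_exp[OF that(1)] .
      moreover have "nodes (mid x1) \<subseteq> nodes V" using nodes_rtc[OF that(2)] that(4) by simp
      ultimately have lt: "card (nodes V - nodes (mid x1)) < m"
        using card_diff_less[of "nodes (mid x)" "nodes (mid x1)" "nodes V"] finite_nodes(1)[of V] cm by simp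
      have "card (nodes V - nodes (mid x1)) = card (nodes V - nodes (mid x1)) \<longrightarrow> valid x1 \<longrightarrow>
          (\<forall>y z. exp\<^sup>*\<^sup>* x1 y \<longrightarrow> exp\<^sup>*\<^sup>* x1 z \<longrightarrow> mid y = V \<longrightarrow> mid z = V \<longrightarrow> y = z)"
        using spec[OF less.IH[OF lt], of x1] .
      then have "\<forall>y z. exp\<^sup>*\<^sup>* x1 y \<longrightarrow> exp\<^sup>*\<^sup>* x1 z \<longrightarrow> mid y = V \<longrightarrow> mid z = V \<longrightarrow> y = z"
        using valid_exp[OF that(1)] by simp
      then show ?thesis using that(2-5) by blast
    qed
    have noret: False if "exp x x1" "exp\<^sup>*\<^sup>* x1 y'" "mid y' = mid x" for x1 y'
      using nodes_exp[OF that(1)] nodes_rtc[OF that(2)] that(3) by auto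
    have key: "y' = z'" if kl: "1 \<le> k" "k < l" "l \<le> leaves (mid x)"
      and a: "exp\<^sup>*\<^sup>* (ex x k) y'" "exp\<^sup>*\<^sup>* (ex x l) z'" "mid y' = V" "mid z' = V" for k l y' z'
    proof -
      let ?x1 = "ex x k" and ?x2 = "ex x l"
      have k: "k \<in> {1..leaves (mid x)}" and l: "l \<in> {1..leaves (mid x)}" using kl by auto
      have e1: "exp x ?x1" "exp x ?x2" using exp_ex[OF vx k] exp_ex[OF vx l] .
      have v1: "valid ?x1" "valid ?x2" using valid_exp e1 by auto
      let ?w = "ex ?x2 k"
      have "l + d - 1 \<in> {1..leaves (mid ?x1)}" using leaves_mid_ex[OF vx k] kl d2 by auto
      then have w1: "exp ?x1 ?w" using exp_ex[OF v1(1), of "l + d - 1"] diamond[OF vx kl] by simp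
      have w2: "exp ?x2 ?w" using exp_ex[OF v1(2), of k] leaves_mid_ex[OF vx l] kl d2 by auto
      have s1: "nodes (mid ?x1) \<subseteq> nodes V" using nodes_rtc[OF a(1)] a(3) by simp
      have s2: "nodes (mid ?x2) \<subseteq> nodes V" using nodes_rtc[OF a(2)] a(4) by simp
      have "nodes (mid ?w) = insert (laddr (mid x) ! (k - 1)) (nodes (mid ?x2))"
        using kl laddr_add_caret_before[OF kl] leaves_add_caret[of l "mid x" d] d2
        by (simp add: mid_ex nodes_add_caret)
      moreover have "laddr (mid x) ! (k - 1) \<in> nodes (mid ?x1)" using kl by (simp add: mid_ex nodes_add_caret)
      ultimately have "nodes (mid ?w) \<subseteq> nodes V" using s1 s2 by auto
      moreover have "dary d V" using a(3) dary_mid valid_rtc[OF a(1) v1(1)] by blast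
      ultimately obtain w' where w': "exp\<^sup>*\<^sup>* ?w w'" "mid w' = V" using reach valid_exp[OF w2] by blast
      have r1: "exp\<^sup>*\<^sup>* ?x1 w'" using w1 w'(1) by (rule converse_rtranclp_into_rtranclp)
      have r2: "exp\<^sup>*\<^sup>* ?x2 w'" using w2 w'(1) by (rule converse_rtranclp_into_rtranclp)
      have "y' = w'" using IH[OF e1(1) a(1) r1 a(3) w'(2)] .
      moreover have "z' = w'" using IH[OF e1(2) a(2) r2 a(4) w'(2)] .
      ultimately show ?thesis by simp
    qed
    show "y = z"
    proof (cases "x = y")
      case True
      show ?thesis
      proof (cases "x = z")
        case True then show ?thesis using \<open>x = y\<close> by simp
      next
        case False
        then obtain x2 where "exp x x2" "exp\<^sup>*\<^sup>* x2 z" using xz by (metis converse_rtranclpE)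
        moreover have "mid z = mid x" using \<open>x = y\<close> my mz by simp
        ultimately show ?thesis using noret by blast
      qed
    next
      case False
      then obtain x1 where x1: "exp x x1" "exp\<^sup>*\<^sup>* x1 y" using xy by (metis converse_rtranclpE)
      show ?thesis
      proof (cases "x = z")
        case True
        then have "mid y = mid x" using my mz by simp
        then show ?thesis using noret x1 by blast
      next
        case False
        then obtain x2 where x2: "exp x x2" "exp\<^sup>*\<^sup>* x2 z" using xz by (metis converse_rtranclpE)
        obtain k where k: "k \<in> {1..leaves (mid x)}" "x1 = ex x k" using x1(1) by (auto simp: exp_iff)
        obtain l where l: "l \<in> {1..leaves (mid x)}" "x2 = ex x l" using x2(1) by (auto simp: exp_iff)
        have ry: "exp\<^sup>*\<^sup>* (ex x k) y" using x1(2) k(2) by simp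
        have rz: "exp\<^sup>*\<^sup>* (ex x l) z" using x2(2) l(2) by simp
        have k1: "1 \<le> k" "k \<le> leaves (mid x)" and l1: "1 \<le> l" "l \<le> leaves (mid x)" using k(1) l(1) by auto
        consider "k = l" | "k < l" | "l < k" by arith
        then show ?thesis
        proof cases
          case 1
          then have "exp\<^sup>*\<^sup>* x1 z" using rz k(2) by simp
          then show ?thesis using IH[OF x1(1) x1(2) _ my mz] by simp
        next
          case 2 show ?thesis using key[OF k1(1) 2 l1(2) ry rz my mz] .
        next
          case 3 then show ?thesis using key[OF l1(1) 3 k1(2) rz ry mz my] by simp
        qed
      qed
    qed
  qed
qed

lemma uniq: "valid x \<Longrightarrow> exp\<^sup>*\<^sup>* x y \<Longrightarrow> exp\<^sup>*\<^sup>* x z \<Longrightarrow> mid y = mid z \<Longrightarrow> y = z"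
proof -
  assume a: "valid x" "exp\<^sup>*\<^sup>* x y" "exp\<^sup>*\<^sup>* x z" "mid y = mid z"
  have "card (nodes (mid y) - nodes (mid x)) = card (nodes (mid y) - nodes (mid x)) \<longrightarrow> valid x \<longrightarrow>
     (\<forall>y' z'. exp\<^sup>*\<^sup>* x y' \<longrightarrow> exp\<^sup>*\<^sup>* x z' \<longrightarrow> mid y' = mid y \<longrightarrow> mid z' = mid y \<longrightarrow> y' = z')"
    using spec[OF uniq_aux[of "mid y" "card (nodes (mid y) - nodes (mid x))"], of x] .
  then have "\<forall>y' z'. exp\<^sup>*\<^sup>* x y' \<longrightarrow> exp\<^sup>*\<^sup>* x z' \<longrightarrow> mid y' = mid y \<longrightarrow> mid z' = mid y \<longrightarrow> y' = z'"
    using a(1) by (meson refl)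
  then show "y = z" using a(2-4) by metis
qed

definition prod :: "'g triple \<Rightarrow> 'g triple \<Rightarrow> 'g triple" where
  "prod x y = (fst x, fst (snd x) \<otimes>\<^bsub>G (leaves (mid x))\<^esub> fst (snd y), snd (snd y))"

lemma P0:
  assumes vx: "valid (T, g, U)" and vy: "valid (U, h, W)" and k': "k' \<in> {1..leaves U}"
  shows "exp (T, g, U) (ex (T, g, U) (\<rho> (leaves U) h k'))"
    and "exp (U, h, W) (ex (U, h, W) k')"
    and "mid (ex (T, g, U) (\<rho> (leaves U) h k')) = fst (ex (U, h, W) k')"
    and "valid (prod (T, g, U) (U, h, W))"
    and "ex (prod (T, g, U) (U, h, W)) k' = prod (ex (T, g, U) (\<rho> (leaves U) h k')) (ex (U, h, W) k')"
proof -
  let ?n = "leaves U"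
  have n: "1 \<le> ?n" using valid_leaves[OF vx] .
  have cx: "dary d T" "dary d U" "leaves T = ?n" "g \<in> carrier (G ?n)" using vx by (auto simp: valid_triple_def)
  have cy: "dary d W" "leaves W = ?n" "h \<in> carrier (G ?n)" using vy by (auto simp: valid_triple_def)
  interpret grp: group "G ?n" using grp[OF n] .
  have kk: "\<rho> ?n h k' \<in> {1..?n}" using permutes_in_image[OF rho_perm[OF n cy(3)]] k' by simp
  show "exp (T, g, U) (ex (T, g, U) (\<rho> ?n h k'))" using exp_ex[OF vx] kk by (simp add: mid_def)
  show "exp (U, h, W) (ex (U, h, W) k')" using exp_ex[OF vy] k' cy by (simp add: mid_def)
  show "mid (ex (T, g, U) (\<rho> ?n h k')) = fst (ex (U, h, W) k')"
    using cy(2) by (simp add: ex_def mid_def)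
  show "valid (prod (T, g, U) (U, h, W))" using cx cy by (simp add: prod_def mid_def valid_triple_def)
  have lU: "leaves (add_caret d (\<rho> ?n h k') U) = ?n + d - 1" using kk by (simp add: leaves_add_caret)
  have C: "\<kappa> ?n k' (g \<otimes>\<^bsub>G ?n\<^esub> h) = \<kappa> ?n (\<rho> ?n h k') g \<otimes>\<^bsub>G (?n + d - 1)\<^esub> \<kappa> ?n k' h"
    using C1[OF n k' cx(4) cy(3)] .
  have R: "\<rho> ?n (g \<otimes>\<^bsub>G ?n\<^esub> h) k' = \<rho> ?n g (\<rho> ?n h k')" using rho_mult[OF n cx(4) cy(3)] by simp
  show "ex (prod (T, g, U) (U, h, W)) k' = prod (ex (T, g, U) (\<rho> ?n h k')) (ex (U, h, W) k')"
    using C R lU cy(2) by (simp add: ex_def prod_def mid_def)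
qed

lemma P1:
  assumes e: "exp x x'" and vy: "valid y" and m: "mid x = fst y"
  shows "\<exists>y'. exp y y' \<and> mid x' = fst y' \<and> exp (prod x y) (prod x' y')"
proof -
  obtain T g U where x: "x = (T, g, U)" by (cases x)
  obtain h W where y: "y = (U, h, W)" using m x by (cases y) (auto simp: mid_def)
  have vx: "valid x" using e by (simp add: exp_iff)
  obtain k where k: "k \<in> {1..leaves U}" "x' = ex x k" using e x by (auto simp: exp_iff mid_def)
  have n: "1 \<le> leaves U" using valid_leaves vx x by simp
  have hc: "h \<in> carrier (G (leaves U))" using vy y by (simp add: valid_triple_def)
  have "k \<in> \<rho> (leaves U) h ` {1..leaves U}" using permutes_image[OF rho_perm[OF n hc]] k by simp
  then obtain k' where k': "k' \<in> {1..leaves U}" "k = \<rho> (leaves U) h k'" by blast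
  note P = P0[OF vx[unfolded x] vy[unfolded y] k'(1)]
  have xx: "x' = ex (T, g, U) (\<rho> (leaves U) h k')" using k k' x by simp
  have f1: "exp y (ex y k')" using P(2) y by simp
  have f2: "mid x' = fst (ex y k')" using P(3) xx y by simp
  have lW: "leaves W = leaves U" using vy y by (simp add: valid_triple_def)
  have e1: "exp (prod (T,g,U) (U,h,W)) (ex (prod (T,g,U) (U,h,W)) k')"
    using exp_ex[OF P(4)] k'(1) lW by (simp add: prod_def mid_def)
  have f3: "exp (prod x y) (prod x' (ex y k'))" using e1[unfolded P(5)] xx x y by simp
  show ?thesis using f1 f2 f3 by blast
qed

lemma P2:
  assumes e: "exp y y'" and vx: "valid x" and m: "mid x = fst y"
  shows "\<exists>x'. exp x x' \<and> mid x' = fst y' \<and> exp (prod x y) (prod x' y')"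
proof -
  obtain T g U where x: "x = (T, g, U)" by (cases x)
  obtain h W where y: "y = (U, h, W)" using m x by (cases y) (auto simp: mid_def)
  have vy: "valid y" using e by (simp add: exp_iff)
  have lW: "leaves W = leaves U" using vy y by (simp add: valid_triple_def)
  obtain k' where k': "k' \<in> {1..leaves U}" "y' = ex y k'" using e y lW by (auto simp: exp_iff mid_def)
  note P = P0[OF vx[unfolded x] vy[unfolded y] k'(1)]
  have f1: "exp x (ex x (\<rho> (leaves U) h k'))" using P(1) x by simp
  have f2: "mid (ex x (\<rho> (leaves U) h k')) = fst y'" using P(3) x y k'(2) by simp
  have e1: "exp (prod (T,g,U) (U,h,W)) (ex (prod (T,g,U) (U,h,W)) k')"
    using exp_ex[OF P(4)] k'(1) lW by (simp add: prod_def mid_def)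
  have f3: "exp (prod x y) (prod (ex x (\<rho> (leaves U) h k')) y')" using e1[unfolded P(5)] k' x y by simp
  show ?thesis using f1 f2 f3 by blast
qed

lemma P1s:
  assumes "exp\<^sup>*\<^sup>* x x'" "valid x" "valid y" "mid x = fst y"
  shows "\<exists>y'. exp\<^sup>*\<^sup>* y y' \<and> mid x' = fst y' \<and> exp\<^sup>*\<^sup>* (prod x y) (prod x' y')"
  using assms(1)
proof (induction rule: rtranclp_induct)
  case base then show ?case using assms by blast
next
  case (step x1 x2)
  then obtain y1 where y1: "exp\<^sup>*\<^sup>* y y1" "mid x1 = fst y1" "exp\<^sup>*\<^sup>* (prod x y) (prod x1 y1)" by blast
  have "valid y1" using valid_rtc[OF y1(1) assms(3)] .
  then obtain y2 where y2: "exp y1 y2" "mid x2 = fst y2" "exp (prod x1 y1) (prod x2 y2)"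
    using P1[OF step(2) _ y1(2)] by blast
  show ?case using y1 y2 by (meson rtranclp.rtrancl_into_rtrancl)
qed

lemma P2s:
  assumes "exp\<^sup>*\<^sup>* y y'" "valid x" "valid y" "mid x = fst y"
  shows "\<exists>x'. exp\<^sup>*\<^sup>* x x' \<and> mid x' = fst y' \<and> exp\<^sup>*\<^sup>* (prod x y) (prod x' y')"
  using assms(1)
proof (induction rule: rtranclp_induct)
  case base then show ?case using assms by blast
next
  case (step y1 y2)
  then obtain x1 where x1: "exp\<^sup>*\<^sup>* x x1" "mid x1 = fst y1" "exp\<^sup>*\<^sup>* (prod x y) (prod x1 y1)" by blast
  have "valid x1" using valid_rtc[OF x1(1) assms(2)] .
  then obtain x2 where x2: "exp x1 x2" "mid x2 = fst y2" "exp (prod x1 y1) (prod x2 y2)"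
    using P2[OF step(2) _ x1(2)] by blast
  show ?case using x1 x2 by (meson rtranclp.rtrancl_into_rtrancl)
qed

lemma WD:
  assumes v: "valid x1" "valid y1" and m1: "mid x1 = fst y1"
    and ex: "equivclp exp x1 x2" and ey: "equivclp exp y1 y2" and m2: "mid x2 = fst y2"
  shows "equivclp exp (prod x1 y1) (prod x2 y2)"
proof -
  have v2: "valid x2" "valid y2" using valid_equiv ex ey v by auto
  obtain x3 where x3: "exp\<^sup>*\<^sup>* x1 x3" "exp\<^sup>*\<^sup>* x2 x3" using ex join by blast
  obtain y1' where y1': "exp\<^sup>*\<^sup>* y1 y1'" "mid x3 = fst y1'" "exp\<^sup>*\<^sup>* (prod x1 y1) (prod x3 y1')"
    using P1s[OF x3(1) v m1] by blast
  obtain y2' where y2': "exp\<^sup>*\<^sup>* y2 y2'" "mid x3 = fst y2'" "exp\<^sup>*\<^sup>* (prod x2 y2) (prod x3 y2')"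
    using P1s[OF x3(2) v2 m2] by blast
  have "equivclp exp y1' y2'"
  proof -
    have "equivclp exp y1' y1" using y1'(1) by (rule converse_rtranclp_into_equivclp)
    also have "equivclp exp y1 y2" by (rule ey)
    also have "equivclp exp y2 y2'" using y2'(1) by (rule rtranclp_into_equivclp)
    finally show ?thesis .
  qed
  then obtain y3 where y3: "exp\<^sup>*\<^sup>* y1' y3" "exp\<^sup>*\<^sup>* y2' y3" using join by blast
  have vx3: "valid x3" using valid_rtc[OF x3(1) v(1)] .
  have vy': "valid y1'" "valid y2'" using valid_rtc y1'(1) y2'(1) v(2) v2(2) by auto
  obtain x4 where x4: "exp\<^sup>*\<^sup>* x3 x4" "mid x4 = fst y3" "exp\<^sup>*\<^sup>* (prod x3 y1') (prod x4 y3)"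
    using P2s[OF y3(1) vx3 vy'(1) y1'(2)] by blast
  obtain x5 where x5: "exp\<^sup>*\<^sup>* x3 x5" "mid x5 = fst y3" "exp\<^sup>*\<^sup>* (prod x3 y2') (prod x5 y3)"
    using P2s[OF y3(2) vx3 vy'(2) y2'(2)] by blast
  have "x4 = x5" using uniq[OF vx3 x4(1) x5(1)] x4(2) x5(2) by simp
  have "equivclp exp (prod x1 y1) (prod x3 y1')" using y1'(3) by (rule rtranclp_into_equivclp)
  also have "equivclp exp (prod x3 y1') (prod x4 y3)" using x4(3) by (rule rtranclp_into_equivclp)
  also have "equivclp exp (prod x4 y3) (prod x3 y2')" using x5(3) \<open>x4 = x5\<close> by (simp add: converse_rtranclp_into_equivclp)
  also have "equivclp exp (prod x3 y2') (prod x2 y2)" using y2'(3) by (rule converse_rtranclp_into_equivclp)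
  finally show ?thesis .
qed

abbreviation "cls \<equiv> tclass d G \<rho> \<kappa>"
abbreviation "tmul \<equiv> Td_mult d G \<rho> \<kappa>"

lemma Td_mult_cls:
  assumes v: "valid x0" "valid y0" and m: "mid x0 = fst y0"
  shows "tmul (cls x0) (cls y0) = cls (prod x0 y0)"
proof (intro equalityI subsetI)
    fix z assume "z \<in> tmul (cls x0) (cls y0)"
    then obtain T g U h W where a: "(T, g, U) \<in> cls x0" "(U, h, W) \<in> cls y0"
      "z \<in> cls (T, g \<otimes>\<^bsub>G (leaves U)\<^esub> h, W)"
      unfolding Td_mult_def by blast
    have "equivclp exp (prod x0 y0) (prod (T, g, U) (U, h, W))"
      using WD[OF v m] a(1,2) by (simp add: tclass_def mid_def)
    moreover have "equivclp exp (prod (T, g, U) (U, h, W)) z"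
      using a(3) by (simp add: tclass_def prod_def mid_def)
    ultimately show "z \<in> cls (prod x0 y0)" unfolding tclass_def by (blast intro: equivclp_trans)
  next
    fix z assume z: "z \<in> cls (prod x0 y0)"
    obtain T g U where x0: "x0 = (T, g, U)" by (cases x0)
    obtain h W where y0: "y0 = (U, h, W)" using m x0 by (cases y0) (auto simp: mid_def)
    have "(T, g, U) \<in> cls x0" "(U, h, W) \<in> cls y0" using x0 y0 by (auto simp: tclass_def)
    moreover have "z \<in> cls (T, g \<otimes>\<^bsub>G (leaves U)\<^esub> h, W)" using z x0 y0 by (simp add: prod_def mid_def)
    ultimately show "z \<in> tmul (cls x0) (cls y0)" unfolding Td_mult_def by blast
qed

lemma cls_eq: "equivclp exp x y \<Longrightarrow> cls x = cls y"
  unfolding tclass_def by (blast intro: equivclp_trans equivclp_sym)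

lemma in_cls: "x \<in> cls x" by (simp add: tclass_def)

lemma cls_mem_eq: "y \<in> cls x \<Longrightarrow> cls y = cls x"
  unfolding tclass_def by (blast intro: equivclp_trans equivclp_sym)

definition idt :: "dtree \<Rightarrow> dtree \<Rightarrow> 'g triple" where
  "idt A B = (A, \<one>\<^bsub>G (leaves B)\<^esub>, B)"

lemma valid_idt: "dary d A \<Longrightarrow> dary d B \<Longrightarrow> leaves A = leaves B \<Longrightarrow> valid (idt A B)"
proof -
  assume a: "dary d A" "dary d B" "leaves A = leaves B"
  have "1 \<le> leaves B" using leaves_pos[OF _ a(2)] d2 by simp
  then interpret group "G (leaves B)" by (rule grp)
  show ?thesis using a by (simp add: idt_def valid_triple_def)
qed

lemma ex_idt:
  assumes v: "valid (idt A B)" and k: "k \<in> {1..leaves B}"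
  shows "ex (idt A B) k = idt (add_caret d k A) (add_caret d k B)"
proof -
  have n: "1 \<le> leaves B" using k by simp
  have "\<rho> (leaves B) \<one>\<^bsub>G (leaves B)\<^esub> k = k" using rho_one[OF n] by simp
  moreover have "\<kappa> (leaves B) k \<one>\<^bsub>G (leaves B)\<^esub> = \<one>\<^bsub>G (leaves (add_caret d k B))\<^esub>"
    using kappa_one[OF n k] k by (simp add: leaves_add_caret)
  ultimately show ?thesis by (simp add: ex_def idt_def)
qed

lemma idt_rtc: "exp\<^sup>*\<^sup>* x z \<Longrightarrow> x = idt A B \<Longrightarrow> \<exists>A' B'. z = idt A' B' \<and> dset A' B' = dset A B"
proof (induction rule: rtranclp_induct)
  case base then show ?case by blast
next
  case (step y z)
  then obtain A' B' where y: "y = idt A' B'" "dset A' B' = dset A B" by blast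
  obtain k where k: "valid y" "k \<in> {1..leaves B'}" "z = ex y k" using step(2) y
    by (auto simp: exp_iff mid_def idt_def)
  have l: "leaves A' = leaves B'" using k(1) y by (simp add: idt_def valid_triple_def)
  have "z = idt (add_caret d k A') (add_caret d k B')" using ex_idt k y by simp
  moreover have "dset (add_caret d k A') (add_caret d k B') = dset A B"
    using dset_add_caret[of d A' B' k] l k(2) y(2) d2 by simp
  ultimately show ?case by blast
qed

lemma idt_distinct:
  assumes "dset A B \<noteq> dset A' B'"
  shows "\<not> equivclp exp (idt A B) (idt A' B')"
proof
  assume "equivclp exp (idt A B) (idt A' B')"
  then obtain w where w: "exp\<^sup>*\<^sup>* (idt A B) w" "exp\<^sup>*\<^sup>* (idt A' B') w" using join by blast
  obtain A1 B1 where 1: "w = idt A1 B1" "dset A1 B1 = dset A B" using idt_rtc[OF w(1)] by blast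
  obtain A2 B2 where 2: "w = idt A2 B2" "dset A2 B2 = dset A' B'" using idt_rtc[OF w(2)] by blast
  have "A1 = A2" "B1 = B2" using 1(1) 2(1) by (auto simp: idt_def)
  then show False using 1 2 assms by simp
qed

lemma prod_idt: "leaves B = leaves C \<Longrightarrow> dary d B \<Longrightarrow> prod (idt A B) (idt B C) = idt A C"
proof -
  assume a: "leaves B = leaves C" "dary d B"
  have "1 \<le> leaves C" using leaves_pos[OF _ a(2)] d2 a(1) by simp
  then interpret group "G (leaves C)" by (rule grp)
  show ?thesis using a by (simp add: prod_def idt_def mid_def)
qed

lemma ex_wn:
  assumes "dary d P" "dary d Q" "leaves P = leaves Q" "1 \<le> k" "k \<le> leaves Q"
  shows "ex (idt (wn d n P) (wn d n Q)) (n * (d - 1) + k) = idt (wn d n (add_caret d k P)) (wn d n (add_caret d k Q))"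
proof -
  have v: "valid (idt (wn d n P) (wn d n Q))"
    using assms d2 by (intro valid_idt dary_wn) (auto simp: leaves_wn)
  have k: "n * (d - 1) + k \<in> {1..leaves (wn d n Q)}" using assms d2 by (simp add: leaves_wn)
  show ?thesis using ex_idt[OF v k] F9 d2 assms by simp
qed

lemma valid_wn: "dary d P \<Longrightarrow> dary d Q \<Longrightarrow> leaves P = leaves Q \<Longrightarrow> valid (idt (wn d n P) (wn d n Q))"
  using d2 by (intro valid_idt dary_wn) (auto simp: leaves_wn)

definition aseq :: "nat \<Rightarrow> 'g triple set" where
  "aseq n = cls (idt (wn d n (X1 d)) (wn d n (Xd d)))"

definition bseq :: "nat \<Rightarrow> 'g triple set" where
  "bseq n = cls (idt (wn d n (rc d 1 (X1 d))) (wn d n (rc d 1 (Xd d))))"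

lemma noncomm: "tmul (aseq n) (bseq n) \<noteq> tmul (bseq n) (aseq n)"
proof -
  let ?o = "n * (d - 1)"
  let ?A1 = "Nd (Xd d # replicate (d - 1) Lf)"
  let ?X1' = "Nd (car d # replicate (d - 2) Lf @ [car d])"
  let ?B1 = "Nd (car d # replicate (d - 2) Lf @ [Xd d])"
  let ?B2 = "Nd (car d # replicate (d - 2) Lf @ [X1 d])"
  have dd: "dary d (X1 d)" "dary d (Xd d)" "dary d (car d)" using dary_X1 dary_Xd dary_car d2 by auto
  have drc: "dary d (rc d j S)" if "dary d S" for j S using dary_rc[OF _ that] d2 by simp
  have dA1: "dary d ?A1" using dd d2 by simp
  have drc1: "dary d (rc d 1 (X1 d))" "dary d (rc d 1 (Xd d))" "dary d (rc d 2 (Xd d))" using drc dd d2 by auto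
  have dX1': "dary d ?X1'" "dary d ?B1" "dary d ?B2" using dd d2 by auto
  let ?a0 = "idt (wn d n (X1 d)) (wn d n (Xd d))"
  let ?b0 = "idt (wn d n (rc d 1 (X1 d))) (wn d n (rc d 1 (Xd d)))"
  have va0: "valid ?a0" using valid_wn dd d2 by simp
  have vb0: "valid ?b0" using valid_wn drc dd d2 by (simp add: leaves_rc)
  have a1: "ex ?a0 (?o + d) = idt (wn d n ?A1) (wn d n (rc d 1 (X1 d)))"
    using ex_wn[OF dd(1,2), of d n] d2 F1 F2 by simp
  have e1: "exp ?a0 (ex ?a0 (?o + d))" using exp_ex[OF va0] d2 by (simp add: mid_def idt_def leaves_wn)
  have ab: "tmul (aseq n) (bseq n) = cls (idt (wn d n ?A1) (wn d n (rc d 1 (Xd d))))"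
  proof -
    have "aseq n = cls (ex ?a0 (?o + d))" unfolding aseq_def using e1 by (intro cls_eq) blast
    moreover have "valid (ex ?a0 (?o + d))" using valid_exp[OF e1] .
    ultimately have "tmul (aseq n) (bseq n) = cls (prod (ex ?a0 (?o + d)) ?b0)"
      unfolding bseq_def using Td_mult_cls vb0 a1 by (simp add: mid_def idt_def)
    also have "prod (ex ?a0 (?o + d)) ?b0 = idt (wn d n ?A1) (wn d n (rc d 1 (Xd d)))"
      unfolding a1 using prod_idt dary_wn drc dd d2 by (simp add: leaves_wn leaves_rc)
    finally show ?thesis .
  qed
  have b1: "ex ?b0 (?o + 1) = idt (wn d n ?B2) (wn d n ?B1)"
    using ex_wn[OF drc1(1) drc1(2), of 1 n] d2 F7 by (simp add: leaves_rc)
  have eb1: "exp ?b0 (ex ?b0 (?o + 1))" using exp_ex[OF vb0] d2 by (simp add: mid_def idt_def leaves_wn)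
  have a2: "ex ?a0 (?o + (2 * d - 1)) = idt (wn d n ?X1') (wn d n (rc d 1 (Xd d)))"
    using ex_wn[OF dd(1,2), of "2 * d - 1" n] d2 F3 F5 by simp
  have r2: "?o + (2 * d - 1) \<in> {1..leaves (mid ?a0)}" using d2 by (auto simp: mid_def idt_def leaves_wn)
  have ea2: "exp ?a0 (ex ?a0 (?o + (2 * d - 1)))" using exp_ex[OF va0 r2] .
  have va2: "valid (idt (wn d n ?X1') (wn d n (rc d 1 (Xd d))))" using valid_exp[OF ea2] a2 by simp
  have a3: "ex (idt (wn d n ?X1') (wn d n (rc d 1 (Xd d)))) (?o + (3 * d - 2)) = idt (wn d n ?B1) (wn d n (rc d 2 (Xd d)))"
    using ex_wn[OF dX1'(1) drc1(2), of "3 * d - 2" n] d2 F4 F6 by (simp add: leaves_rc)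
  have ea3: "exp (idt (wn d n ?X1') (wn d n (rc d 1 (Xd d)))) (ex (idt (wn d n ?X1') (wn d n (rc d 1 (Xd d)))) (?o + (3 * d - 2)))"
  proof -
    have r3: "?o + (3 * d - 2) \<in> {1..leaves (mid (idt (wn d n ?X1') (wn d n (rc d 1 (Xd d)))))}"
      using d2 by (auto simp: mid_def idt_def leaves_wn leaves_rc)
    show ?thesis using exp_ex[OF va2 r3] .
  qed
  have ba: "tmul (bseq n) (aseq n) = cls (idt (wn d n ?B2) (wn d n (rc d 2 (Xd d))))"
  proof -
    have "bseq n = cls (ex ?b0 (?o + 1))" unfolding bseq_def using eb1 by (intro cls_eq) blast
    moreover have "aseq n = cls (idt (wn d n ?B1) (wn d n (rc d 2 (Xd d))))"
    proof -
      have "exp\<^sup>*\<^sup>* ?a0 (idt (wn d n ?B1) (wn d n (rc d 2 (Xd d))))"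
        using ea2 ea3 a2 a3 by (metis (no_types, lifting) r_into_rtranclp rtranclp.rtrancl_into_rtrancl)
      then show ?thesis unfolding aseq_def by (intro cls_eq rtranclp_into_equivclp)
    qed
    moreover have "valid (ex ?b0 (?o + 1))" using valid_exp[OF eb1] .
    moreover have "valid (idt (wn d n ?B1) (wn d n (rc d 2 (Xd d))))" using valid_exp[OF ea3] a3 by simp
    ultimately have "tmul (bseq n) (aseq n) = cls (prod (ex ?b0 (?o + 1)) (idt (wn d n ?B1) (wn d n (rc d 2 (Xd d)))))"
      using Td_mult_cls b1 by (simp add: mid_def idt_def)
    also have "prod (ex ?b0 (?o + 1)) (idt (wn d n ?B1) (wn d n (rc d 2 (Xd d)))) = idt (wn d n ?B2) (wn d n (rc d 2 (Xd d)))"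
      unfolding b1 using prod_idt dary_wn drc dd dX1' d2 by (simp add: leaves_wn leaves_rc)
    finally show ?thesis .
  qed
  have l1: "leaves ?A1 = leaves (rc d 1 (Xd d))" using d2 by (simp add: leaves_rc)
  have l2: "leaves ?B2 = leaves (rc d 2 (Xd d))" using d2 by (simp add: leaves_rc)
  have "dset (wn d n ?A1) (wn d n (rc d 1 (Xd d))) \<noteq> dset (wn d n ?B2) (wn d n (rc d 2 (Xd d)))"
  proof -
    have e1: "dset (wn d n ?A1) (wn d n (rc d 1 (Xd d))) = insert 0 (dset ?A1 (rc d 1 (Xd d)))"
      by (rule dset_wn[OF d2 l1])
    have e2: "dset (wn d n ?B2) (wn d n (rc d 2 (Xd d))) = insert 0 (dset ?B2 (rc d 2 (Xd d)))"
      by (rule dset_wn[OF d2 l2])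
    have "- 1 \<notin> dset (wn d n ?A1) (wn d n (rc d 1 (Xd d)))" unfolding e1 using ab_no[OF d2] by simp
    moreover have "- 1 \<in> dset (wn d n ?B2) (wn d n (rc d 2 (Xd d)))" unfolding e2 using ba_yes[OF d2] by simp
    ultimately show ?thesis by metis
  qed
  then have "\<not> equivclp exp (idt (wn d n ?A1) (wn d n (rc d 1 (Xd d)))) (idt (wn d n ?B2) (wn d n (rc d 2 (Xd d))))"
    by (rule idt_distinct)
  then show ?thesis unfolding ab ba using in_cls by (metis cls_mem_eq tclass_def mem_Collect_eq)
qed

lemma clone_fix:
  assumes "\<forall>i. a < i \<and> i \<le> M \<longrightarrow> \<sigma> i = i" "a < k" "k \<le> M" "a < i" "i \<le> M + d - 1" "1 \<le> d"
  shows "clone_perm d k \<sigma> i = i"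
proof -
  have sk: "\<sigma> k = k" using assms by auto
  consider "i < k" | "k \<le> i \<and> i < k + d" | "k + d \<le> i" by arith
  then show ?thesis
  proof cases
    case 1 then show ?thesis using assms sk by (simp add: clone_perm_def Let_def)
  next
    case 2 then show ?thesis using assms sk by (simp add: clone_perm_def Let_def)
  next
    case 3
    have "a < i - (d - 1) \<and> i - (d - 1) \<le> M" using assms 3 by auto
    then have "\<sigma> (i - (d - 1)) = i - (d - 1)" using assms(1) by blast
    then show ?thesis using assms sk 3 by (simp add: clone_perm_def Let_def)
  qed
qed

definition fx :: "nat \<Rightarrow> 'g triple \<Rightarrow> bool" where
  "fx N x = (\<forall>i. N - 1 < i \<and> i \<le> leaves (mid x) \<longrightarrow> \<rho> (leaves (mid x)) (fst (snd x)) i = i)"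

lemma HX:
  assumes vT: "dary d T" "dary d U" "leaves T = leaves U"
    and v: "valid (glast T S, g', glast U S)" and dS: "dary d S"
    and f: "fx (leaves U) (glast T S, g', glast U S)" and j: "1 \<le> j" "j \<le> leaves S"
  shows "ex (glast T S, g', glast U S) (leaves U - 1 + j) =
           (glast T (add_caret d j S), \<kappa> (leaves (glast U S)) (leaves U - 1 + j) g', glast U (add_caret d j S))"
    and "exp (glast T S, g', glast U S) (ex (glast T S, g', glast U S) (leaves U - 1 + j))"
    and "fx (leaves U) (glast T (add_caret d j S), \<kappa> (leaves (glast U S)) (leaves U - 1 + j) g', glast U (add_caret d j S))"
proof -
  let ?N = "leaves U" and ?M = "leaves (glast U S)" and ?k = "leaves U - 1 + j"
  have d0: "0 < d" using d2 by simp
  have N: "1 \<le> ?N" using leaves_pos[OF d0 vT(2)] by simp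
  have M: "?M + 1 = ?N + leaves S" using glast_props[OF d0 vT(2) dS] by simp
  have k: "?k \<in> {1..?M}" using N M j by auto
  have gc: "g' \<in> carrier (G ?M)" using v by (simp add: valid_triple_def)
  have M1: "1 \<le> ?M" using k by simp
  have "?N - 1 < ?k" using j N by simp
  then have fixk: "\<rho> ?M g' ?k = ?k" using f k unfolding fx_def mid_def by auto
  show e: "ex (glast T S, g', glast U S) ?k =
           (glast T (add_caret d j S), \<kappa> ?M ?k g', glast U (add_caret d j S))"
    using fixk add_caret_glast_right[OF d0 vT(1) j dS] add_caret_glast_right[OF d0 vT(2) j dS] vT(3)
    by (simp add: ex_def)
  show "exp (glast T S, g', glast U S) (ex (glast T S, g', glast U S) ?k)"
    using exp_ex[OF v] k by (simp add: mid_def)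
  have lS: "leaves (add_caret d j S) = leaves S + d - 1" using j by (simp add: leaves_add_caret)
  have dSj: "dary d (add_caret d j S)" using dS by (rule dary_add_caret)
  have "leaves (glast U (add_caret d j S)) + 1 = ?N + leaves (add_caret d j S)"
    using glast_props[OF d0 vT(2) dSj] by simp
  then have M': "leaves (glast U (add_caret d j S)) = ?M + d - 1" using lS M N d2 by arith
  have fx0: "\<forall>i. ?N - 1 < i \<and> i \<le> ?M \<longrightarrow> \<rho> ?M g' i = i" using f by (simp add: fx_def mid_def)
  show "fx ?N (glast T (add_caret d j S), \<kappa> ?M ?k g', glast U (add_caret d j S))"
    unfolding fx_def mid_def
  proof (intro allI impI)
    fix i assume i: "?N - 1 < i \<and> i \<le> leaves (snd (snd (glast T (add_caret d j S), \<kappa> ?M ?k g', glast U (add_caret d j S))))"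
    have "\<rho> (?M + d - 1) (\<kappa> ?M ?k g') i = clone_perm d ?k (\<rho> ?M g') i" by (rule FC[OF M1 k gc])
    also have "\<dots> = i" using clone_fix[OF fx0, of ?k i] i M' k j d2 by auto
    finally show "\<rho> (leaves (snd (snd (glast T (add_caret d j S), \<kappa> ?M ?k g', glast U (add_caret d j S)))))
        (fst (snd (glast T (add_caret d j S), \<kappa> ?M ?k g', glast U (add_caret d j S)))) i = i"
      using M' by simp
  qed
qed

definition reachS :: "'g triple \<Rightarrow> dtree \<Rightarrow> 'g \<Rightarrow> bool" where
  "reachS x S g' = (case x of (T, g, U) \<Rightarrow> exp\<^sup>*\<^sup>* (T, g, U) (glast T S, g', glast U S) \<and>
     fx (leaves U) (glast T S, g', glast U S) \<and> valid (glast T S, g', glast U S))"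

lemma reach_step:
  assumes v: "valid (T, g, U)" and r: "reachS (T, g, U) S g'" and dS: "dary d S" and p: "1 \<le> p" "p \<le> leaves S"
  shows "reachS (T, g, U) (add_caret d p S) (\<kappa> (leaves (glast U S)) (leaves U - 1 + p) g')"
proof -
  have vT: "dary d T" "dary d U" "leaves T = leaves U" using v by (auto simp: valid_triple_def)
  have r': "exp\<^sup>*\<^sup>* (T, g, U) (glast T S, g', glast U S)" "fx (leaves U) (glast T S, g', glast U S)"
    "valid (glast T S, g', glast U S)" using r by (auto simp: reachS_def)
  note H = HX[OF vT r'(3) dS r'(2) p]
  have e: "exp (glast T S, g', glast U S) (glast T (add_caret d p S), \<kappa> (leaves (glast U S)) (leaves U - 1 + p) g', glast U (add_caret d p S))"
    using H(2) H(1) by simp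
  show ?thesis unfolding reachS_def using r'(1) e H(3) valid_exp[OF e]
    by (auto intro: rtranclp.rtrancl_into_rtrancl)
qed

lemma reach_base: "valid (T, g, U) \<Longrightarrow> reachS (T, g, U) Lf g"
proof -
  assume v: "valid (T, g, U)"
  have n: "1 \<le> leaves U" using valid_leaves[OF v] .
  have gc: "g \<in> carrier (G (leaves U))" using v by (simp add: valid_triple_def)
  have "fx (leaves U) (T, g, U)" unfolding fx_def mid_def
  proof (intro allI impI)
    fix i assume "leaves U - 1 < i \<and> i \<le> leaves (snd (snd (T, g, U)))"
    then have "i = leaves U" by simp arith
    then show "\<rho> (leaves (snd (snd (T, g, U)))) (fst (snd (T, g, U))) i = i" using SP[OF n gc] by simp
  qed
  then show ?thesis using v by (simp add: reachS_def glast_Lf)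
qed

lemma reach_unif:
  assumes v: "valid (T, g, U)" and r: "reachS (T, g, U) S g'" and dS: "dary d S" and p: "1 \<le> p" "p \<le> leaves S"
  shows "\<exists>g1. reachS (T, g, U) (add_caret d p (add_caret d p S)) g1 \<and>
              reachS (T, g, U) (add_caret d (p + d - 1) (add_caret d p S)) g1"
proof -
  let ?N = "leaves U" and ?M = "leaves (glast U S)" and ?k = "leaves U - 1 + p"
  have d0: "0 < d" using d2 by simp
  have vT: "dary d T" "dary d U" "leaves T = leaves U" using v by (auto simp: valid_triple_def)
  have N: "1 \<le> ?N" using leaves_pos[OF d0 vT(2)] by simp
  have M: "?M + 1 = ?N + leaves S" using glast_props[OF d0 vT(2) dS] by simp
  let ?S' = "add_caret d p S" and ?g'' = "\<kappa> ?M ?k g'"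
  have r1: "reachS (T, g, U) ?S' ?g''" using reach_step[OF v r dS p] .
  have dS': "dary d ?S'" using dS by (rule dary_add_caret)
  have lS': "leaves ?S' = leaves S + d - 1" using p by (simp add: leaves_add_caret)
  have "leaves (glast U ?S') + 1 = ?N + leaves ?S'" using glast_props[OF d0 vT(2) dS'] by simp
  then have M': "leaves (glast U ?S') = ?M + d - 1" using lS' M N d2 by arith
  have p2: "1 \<le> p + d - 1" "p + d - 1 \<le> leaves ?S'" "p \<le> leaves ?S'" using p lS' d2 by auto
  have ra: "reachS (T, g, U) (add_caret d p ?S') (\<kappa> (leaves (glast U ?S')) ?k ?g'')"
    using reach_step[OF v r1 dS' p(1) p2(3)] .
  have rb: "reachS (T, g, U) (add_caret d (p + d - 1) ?S') (\<kappa> (leaves (glast U ?S')) (?N - 1 + (p + d - 1)) ?g'')"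
    using reach_step[OF v r1 dS' p2(1) p2(2)] .
  have gc: "g' \<in> carrier (G ?M)" using r by (simp add: reachS_def valid_triple_def)
  have M1: "1 \<le> ?M" using M N p by simp
  have k: "?k \<in> {1..?M}" using M N p by auto
  have "\<kappa> (?M + d - 1) ?k ?g'' = \<kappa> (?M + d - 1) (?k + d - 1) ?g''"
    by (rule UN[OF M1 k _ _ _ gc]) (use d2 in auto)
  moreover have "?N - 1 + (p + d - 1) = ?k + d - 1" using N p d2 by simp
  ultimately have "\<kappa> (leaves (glast U ?S')) ?k ?g'' = \<kappa> (leaves (glast U ?S')) (?N - 1 + (p + d - 1)) ?g''"
    using M' by simp
  then have rb': "reachS (T, g, U) (add_caret d (p + d - 1) ?S') (\<kappa> (leaves (glast U ?S')) ?k ?g'')"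
    using rb by simp
  show ?thesis using ra rb' by blast
qed

lemma rc_Lf_Suc: "rc d (Suc j) Lf = add_caret d (j * (d - 1) + 1) (rc d j Lf)"
proof -
  have "add_caret d (j * (d - 1) + 1) (rc d j Lf) = rc d j (add_caret d 1 Lf)"
    by (rule add_caret_rc) simp_all
  also have "\<dots> = rc d j (rc d 1 Lf)"
  proof -
    have "replicate (d - 1) Lf @ [Lf] = replicate d Lf" using d2 by (cases d) (auto simp: replicate_append_same)
    then show ?thesis by simp
  qed
  also have "\<dots> = rc d (Suc j) Lf" by (simp only: rc_rc Suc_eq_plus1)
  finally show ?thesis by simp
qed

lemma reach_rc: "valid (T, g, U) \<Longrightarrow> \<exists>g'. reachS (T, g, U) (rc d j Lf) g'"
proof (induction j)
  case 0 then show ?case using reach_base by auto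
next
  case (Suc j)
  then obtain g' where r: "reachS (T, g, U) (rc d j Lf) g'" by blast
  have dS: "dary d (rc d j Lf)" using dary_rc d2 by simp
  have p: "1 \<le> j * (d - 1) + 1" "j * (d - 1) + 1 \<le> leaves (rc d j Lf)" by (simp_all add: leaves_rc)
  show ?case using reach_step[OF Suc.prems r dS p] unfolding rc_Lf_Suc[symmetric] by blast
qed

lemma rc_glast: "rc d m S = glast (rc d m Lf) S"
proof (induction m)
  case 0 then show ?case by simp
next
  case (Suc m) then show ?case by (simp add: glasts_snoc)
qed

lemma nlr_dary: "nlr d P Q \<Longrightarrow> dary d P \<Longrightarrow> dary d Q"
  by (induction rule: nlr.induct) (auto intro: dary_add_caret)

lemma IDX:
  assumes "nlr d P Q" "dary d P" "dary d S1" "dary d S2" "leaves S1 = leaves S2"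
  shows "exp\<^sup>*\<^sup>* (idt (glast P S1) (glast P S2)) (idt (glast Q S1) (glast Q S2))"
  using assms(1,2)
proof (induction rule: nlr.induct)
  case (nlr_refl A) then show ?case by simp
next
  case (nlr_step A B k)
  have d0: "0 < d" using d2 by simp
  have dB: "dary d B" using nlr_dary[OF nlr_step(1,5)] .
  have p1: "leaves (glast B S1) + 1 = leaves B + leaves S1" using glast_props[OF d0 dB assms(3)] by simp
  have p2: "leaves (glast B S2) + 1 = leaves B + leaves S2" using glast_props[OF d0 dB assms(4)] by simp
  have dg: "dary d (glast B S1)" "dary d (glast B S2)"
    using glast_props[OF d0 dB assms(3)] glast_props[OF d0 dB assms(4)] by auto
  have v: "valid (idt (glast B S1) (glast B S2))" using valid_idt dg p1 p2 assms(5) by simp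
  have lS: "1 \<le> leaves S2" using leaves_pos[OF d0 assms(4)] by simp
  have k: "k \<in> {1..leaves (glast B S2)}" using nlr_step(2,3) p2 lS by auto
  have "ex (idt (glast B S1) (glast B S2)) k = idt (add_caret d k (glast B S1)) (add_caret d k (glast B S2))"
    using ex_idt[OF v k] .
  also have "\<dots> = idt (glast (add_caret d k B) S1) (glast (add_caret d k B) S2)"
    using add_caret_glast_left[OF d0 dB assms(3) nlr_step(2,3)] add_caret_glast_left[OF d0 dB assms(4) nlr_step(2,3)]
    by simp
  finally have eq: "ex (idt (glast B S1) (glast B S2)) k = idt (glast (add_caret d k B) S1) (glast (add_caret d k B) S2)" .
  have mk: "leaves (mid (idt (glast B S1) (glast B S2))) = leaves (glast B S2)" by (simp add: mid_def idt_def)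
  have "exp (idt (glast B S1) (glast B S2)) (ex (idt (glast B S1) (glast B S2)) k)"
    using exp_ex[OF v] k unfolding mk by blast
  then have "exp (idt (glast B S1) (glast B S2)) (idt (glast (add_caret d k B) S1) (glast (add_caret d k B) S2))"
    unfolding eq .
  then show ?case using nlr_step(4)[OF nlr_step(5)] by (rule rtranclp.rtrancl_into_rtrancl[rotated])
qed

lemma wn_glast: "m \<le> n \<Longrightarrow> wn d n Z = glast (rc d m Lf) (wn d (n - m) Z)"
proof -
  assume mn: "m \<le> n"
  let ?X = "Nd (Z # replicate (d - 1) Lf)"
  have "rc d n ?X = rc d m (rc d (n - m) ?X)" using rc_rc[of d m "n - m" ?X] mn by simp
  also have "\<dots> = glast (rc d m Lf) (rc d (n - m) ?X)" by (rule rc_glast)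
  finally show ?thesis unfolding wn_def .
qed

lemma COMM:
  assumes v: "valid (T, g, U)" and dT: "delta_r T = m" and dU: "delta_r U = m" and mn: "m \<le> n"
    and r1: "reachS (T, g, U) (wn d (n - m) Z1) g1" and r2: "reachS (T, g, U) (wn d (n - m) Z2) g1"
    and dZ: "dary d Z1" "dary d Z2" "leaves Z1 = leaves Z2"
  shows "tmul (cls (T, g, U)) (cls (idt (wn d n Z1) (wn d n Z2))) =
         tmul (cls (idt (wn d n Z1) (wn d n Z2))) (cls (T, g, U))"
proof -
  have d0: "0 < d" using d2 by simp
  have vT: "dary d T" "dary d U" "leaves T = leaves U" using v by (auto simp: valid_triple_def)
  let ?S1 = "wn d (n - m) Z1" and ?S2 = "wn d (n - m) Z2"
  have dS: "dary d ?S1" "dary d ?S2" using dary_wn dZ d2 by auto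
  have lS: "leaves ?S1 = leaves ?S2" using dZ d2 by (simp add: leaves_wn)
  have dR: "dary d (rc d m Lf)" using dary_rc d0 by simp
  have W: "wn d n Z1 = glast (rc d m Lf) ?S1" "wn d n Z2 = glast (rc d m Lf) ?S2"
    using wn_glast[OF mn] by auto
  have nU: "nlr d (rc d m Lf) U" using nlr_rc[OF d0 vT(2)] dU by simp
  have nT: "nlr d (rc d m Lf) T" using nlr_rc[OF d0 vT(1)] dT by simp
  let ?y = "idt (glast U ?S1) (glast U ?S2)" and ?y' = "idt (glast T ?S1) (glast T ?S2)"
  let ?A = "idt (wn d n Z1) (wn d n Z2)"
  have eA: "cls ?A = cls ?y" unfolding W using IDX[OF nU dR dS lS] by (intro cls_eq rtranclp_into_equivclp)
  have eA': "cls ?A = cls ?y'" unfolding W using IDX[OF nT dR dS lS] by (intro cls_eq rtranclp_into_equivclp)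
  let ?x1 = "(glast T ?S1, g1, glast U ?S1)" and ?x2 = "(glast T ?S2, g1, glast U ?S2)"
  have rx: "exp\<^sup>*\<^sup>* (T, g, U) ?x1" "exp\<^sup>*\<^sup>* (T, g, U) ?x2" "valid ?x1" "valid ?x2"
    using r1 r2 by (auto simp: reachS_def)
  have eh1: "cls (T, g, U) = cls ?x1" using rx(1) by (intro cls_eq rtranclp_into_equivclp)
  have eh2: "cls (T, g, U) = cls ?x2" using rx(2) by (intro cls_eq rtranclp_into_equivclp)
  have gp: "\<And>X S. dary d X \<Longrightarrow> dary d S \<Longrightarrow> dary d (glast X S) \<and> leaves (glast X S) + 1 = leaves X + leaves S"
    using glast_props[OF d0] by blast
  have L: "leaves (glast U ?S2) = leaves (glast U ?S1)" "leaves (glast T ?S2) = leaves (glast U ?S1)"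
    using gp[OF vT(2) dS(1)] gp[OF vT(2) dS(2)] gp[OF vT(1) dS(2)] lS vT(3) by auto
  have vy: "valid ?y" "valid ?y'"
    using valid_idt gp[OF vT(2) dS(1)] gp[OF vT(2) dS(2)] gp[OF vT(1) dS(1)] gp[OF vT(1) dS(2)] L vT(3) lS by auto
  have "tmul (cls (T, g, U)) (cls ?A) = cls (prod ?x1 ?y)"
    unfolding eh1 eA using Td_mult_cls[OF rx(3) vy(1)] by (simp add: mid_def idt_def)
  also have "prod ?x1 ?y = (glast T ?S1, g1, glast U ?S2)"
  proof -
    have g1: "g1 \<in> carrier (G (leaves (glast U ?S1)))" using rx(3) by (simp add: valid_triple_def)
    have "1 \<le> leaves (glast U ?S1)" using valid_leaves[OF rx(3)] .
    then interpret group "G (leaves (glast U ?S1))" by (rule grp)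
    show ?thesis using g1 L by (simp add: prod_def idt_def mid_def)
  qed
  also have "\<dots> = prod ?y' ?x2"
  proof -
    have g1: "g1 \<in> carrier (G (leaves (glast U ?S1)))" using rx(3) by (simp add: valid_triple_def)
    have "1 \<le> leaves (glast U ?S1)" using valid_leaves[OF rx(3)] .
    then interpret group "G (leaves (glast U ?S1))" by (rule grp)
    show ?thesis using g1 L by (simp add: prod_def idt_def mid_def)
  qed
  also have "cls (prod ?y' ?x2) = tmul (cls ?A) (cls (T, g, U))"
    unfolding eh2 eA' using Td_mult_cls[OF vy(2) rx(4)] by (simp add: mid_def idt_def)
  finally show ?thesis .
qed

lemma wn_Lf: "wn d j Lf = rc d (Suc j) Lf"
proof -
  have "replicate (d - 1) Lf @ [Lf] = Lf # replicate (d - 1) Lf" by (simp add: replicate_append_same)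
  then have "rc d 1 Lf = Nd (Lf # replicate (d - 1) Lf)" by simp
  then show ?thesis unfolding wn_def using rc_rc[of d j 1 Lf] by simp
qed

lemma wn_step: "1 \<le> k \<Longrightarrow> k \<le> leaves Z \<Longrightarrow> add_caret d (j * (d - 1) + k) (wn d j Z) = wn d j (add_caret d k Z)"
  using F9[OF d2] by blast

lemma reach_ab:
  assumes v: "valid (T, g, U)"
  shows "\<exists>g1. reachS (T, g, U) (wn d j (X1 d)) g1 \<and> reachS (T, g, U) (wn d j (Xd d)) g1"
    and "\<exists>g1. reachS (T, g, U) (wn d j (rc d 1 (X1 d))) g1 \<and> reachS (T, g, U) (wn d j (rc d 1 (Xd d))) g1"
proof -
  have d0: "0 < d" using d2 by simp
  obtain g0 where r0: "reachS (T, g, U) (wn d j Lf) g0" using reach_rc[OF v, of "Suc j"] wn_Lf by auto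
  let ?p = "j * (d - 1) + 1"
  have dw: "dary d (wn d j Lf)" using dary_wn d2 by simp
  have lw: "leaves (wn d j Lf) = j * (d - 1) + 1 + (d - 1)" using leaves_wn[OF d2] by simp
  have p: "1 \<le> ?p" "?p \<le> leaves (wn d j Lf)" using lw by auto
  have s1: "add_caret d ?p (wn d j Lf) = wn d j (car d)" using wn_step[of 1 Lf j] by (simp add: car_def)
  have s2: "add_caret d ?p (wn d j (car d)) = wn d j (X1 d)" using wn_step[of 1 "car d" j] car1[OF d2] d2 by simp
  have s3: "add_caret d (?p + d - 1) (wn d j (car d)) = wn d j (Xd d)"
    using wn_step[of d "car d" j] card'[OF d2] d2 by (simp add: algebra_simps)
  show "\<exists>g1. reachS (T, g, U) (wn d j (X1 d)) g1 \<and> reachS (T, g, U) (wn d j (Xd d)) g1"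
    using reach_unif[OF v r0 dw p] s1 s2 s3 by simp
  obtain g2 where r2: "reachS (T, g, U) (wn d j (car d)) g2" using reach_step[OF v r0 dw p] s1 by auto
  let ?q = "j * (d - 1) + d"
  have dwc: "dary d (wn d j (car d))" using dary_wn dary_car d2 by simp
  have q: "1 \<le> ?q" "?q \<le> leaves (wn d j (car d))" using leaves_wn[OF d2] d2 by auto
  have t1: "add_caret d ?q (wn d j (car d)) = wn d j (Xd d)" using wn_step[of d "car d" j] card'[OF d2] d2 by simp
  have t2: "add_caret d ?q (wn d j (Xd d)) = wn d j (rc d 1 (X1 d))" using wn_step[of d "Xd d" j] F2[OF d2] d2 by simp
  have t3: "add_caret d (?q + d - 1) (wn d j (Xd d)) = wn d j (rc d 1 (Xd d))"
  proof -
    have "?q + d - 1 = j * (d - 1) + (2 * d - 1)" using d2 by simp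
    then show ?thesis using wn_step[of "2 * d - 1" "Xd d" j] F5[OF d2] d2 by simp
  qed
  show "\<exists>g1. reachS (T, g, U) (wn d j (rc d 1 (X1 d))) g1 \<and> reachS (T, g, U) (wn d j (rc d 1 (Xd d))) g1"
    using reach_unif[OF v r2 dwc q] t1 t2 t3 by simp
qed

lemma in_Dd: "dary d P \<Longrightarrow> dary d Q \<Longrightarrow> leaves P = leaves Q \<Longrightarrow> cls (idt (wn d n P) (wn d n Q)) \<in> Dd_carrier d G \<rho> \<kappa>"
proof -
  assume a: "dary d P" "dary d Q" "leaves P = leaves Q"
  have v: "valid (wn d n P, \<one>\<^bsub>G (leaves (wn d n Q))\<^esub>, wn d n Q)" using valid_wn[OF a] by (simp add: idt_def)
  have "delta_r (wn d n P) = delta_r (wn d n Q)" using delta_r_wn[OF d2] by simp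
  then show ?thesis unfolding Dd_carrier_def idt_def using v by blast
qed

theorem main:
  "\<exists>a b :: nat \<Rightarrow> 'g triple set.
     (\<forall>n. a n \<in> Dd_carrier d G \<rho> \<kappa> \<and> b n \<in> Dd_carrier d G \<rho> \<kappa> \<and>
          Td_mult d G \<rho> \<kappa> (a n) (b n) \<noteq> Td_mult d G \<rho> \<kappa> (b n) (a n)) \<and>
     (\<forall>h\<in>Dd_carrier d G \<rho> \<kappa>.
        finite {n. Td_mult d G \<rho> \<kappa> h (a n) \<noteq> Td_mult d G \<rho> \<kappa> (a n) h \<or>
                   Td_mult d G \<rho> \<kappa> h (b n) \<noteq> Td_mult d G \<rho> \<kappa> (b n) h})"
proof -
  have dd: "dary d (X1 d)" "dary d (Xd d)" "dary d (rc d 1 (X1 d))" "dary d (rc d 1 (Xd d))"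
    using dary_X1 dary_Xd dary_rc d2 by auto
  have ll: "leaves (X1 d) = leaves (Xd d)" "leaves (rc d 1 (X1 d)) = leaves (rc d 1 (Xd d))"
    using d2 by (simp_all add: leaves_rc)
  have A: "\<forall>n. aseq n \<in> Dd_carrier d G \<rho> \<kappa> \<and> bseq n \<in> Dd_carrier d G \<rho> \<kappa> \<and>
          tmul (aseq n) (bseq n) \<noteq> tmul (bseq n) (aseq n)"
  proof
    fix n
    show "aseq n \<in> Dd_carrier d G \<rho> \<kappa> \<and> bseq n \<in> Dd_carrier d G \<rho> \<kappa> \<and>
          tmul (aseq n) (bseq n) \<noteq> tmul (bseq n) (aseq n)"
      using in_Dd[OF dd(1,2) ll(1), of n] in_Dd[OF dd(3,4) ll(2), of n] noncomm[of n]
      unfolding aseq_def bseq_def by blast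
  qed
  have B: "\<forall>h\<in>Dd_carrier d G \<rho> \<kappa>. finite {n. tmul h (aseq n) \<noteq> tmul (aseq n) h \<or> tmul h (bseq n) \<noteq> tmul (bseq n) h}"
  proof
  fix h assume "h \<in> Dd_carrier d G \<rho> \<kappa>"
  then obtain T g U where h: "h = cls (T, g, U)" "valid (T, g, U)" "delta_r T = delta_r U"
    unfolding Dd_carrier_def by blast
  have dd: "dary d (X1 d)" "dary d (Xd d)" "dary d (rc d 1 (X1 d))" "dary d (rc d 1 (Xd d))"
    using dary_X1 dary_Xd dary_rc d2 by auto
  have ll: "leaves (X1 d) = leaves (Xd d)" "leaves (rc d 1 (X1 d)) = leaves (rc d 1 (Xd d))"
    using d2 by (simp_all add: leaves_rc)
  let ?m = "delta_r U"
  have "{n. tmul h (aseq n) \<noteq> tmul (aseq n) h \<or> tmul h (bseq n) \<noteq> tmul (bseq n) h} \<subseteq> {..<?m}"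
  proof (rule subsetI, rule ccontr)
    fix n assume n: "n \<in> {n. tmul h (aseq n) \<noteq> tmul (aseq n) h \<or> tmul h (bseq n) \<noteq> tmul (bseq n) h}"
      and "n \<notin> {..<?m}"
    then have mn: "?m \<le> n" by simp
    obtain g1 where a: "reachS (T, g, U) (wn d (n - ?m) (X1 d)) g1" "reachS (T, g, U) (wn d (n - ?m) (Xd d)) g1"
      using reach_ab(1)[OF h(2)] by blast
    obtain g2 where b: "reachS (T, g, U) (wn d (n - ?m) (rc d 1 (X1 d))) g2"
        "reachS (T, g, U) (wn d (n - ?m) (rc d 1 (Xd d))) g2"
      using reach_ab(2)[OF h(2)] by blast
    have "tmul h (aseq n) = tmul (aseq n) h"
      unfolding h(1) aseq_def using COMM[OF h(2) h(3) refl mn a dd(1,2) ll(1)] .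
    moreover have "tmul h (bseq n) = tmul (bseq n) h"
      unfolding h(1) bseq_def using COMM[OF h(2) h(3) refl mn b dd(3,4) ll(2)] .
    ultimately show False using n by auto
  qed
  then show "finite {n. tmul h (aseq n) \<noteq> tmul (aseq n) h \<or> tmul h (bseq n) \<noteq> tmul (bseq n) h}"
    by (rule finite_subset) simp
  qed
  show ?thesis by (rule exI[of _ aseq], rule exI[of _ bseq], rule conjI[OF A B])
qed

end

theorem lemma3p4:
  fixes d :: nat and G :: "nat \<Rightarrow> 'g monoid" and \<rho> :: "nat \<Rightarrow> 'g \<Rightarrow> nat \<Rightarrow> nat"
    and \<kappa> :: "nat \<Rightarrow> nat \<Rightarrow> 'g \<Rightarrow> 'g"
  assumes "d \<ge> 2"
    and "cloning_system d G \<rho> \<kappa>"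
    and "fully_compatible d G \<rho> \<kappa>"
    and "slightly_pure G \<rho>"
    and "uniform d G \<kappa>"
  shows "\<exists>a b :: nat \<Rightarrow> 'g triple set.
           (\<forall>n. a n \<in> Dd_carrier d G \<rho> \<kappa> \<and> b n \<in> Dd_carrier d G \<rho> \<kappa> \<and>
                Td_mult d G \<rho> \<kappa> (a n) (b n) \<noteq> Td_mult d G \<rho> \<kappa> (b n) (a n)) \<and>
           (\<forall>h\<in>Dd_carrier d G \<rho> \<kappa>.
              finite {n. Td_mult d G \<rho> \<kappa> h (a n) \<noteq> Td_mult d G \<rho> \<kappa> (a n) h \<or>
                         Td_mult d G \<rho> \<kappa> h (b n) \<noteq> Td_mult d G \<rho> \<kappa> (b n) h})"
proof -
  interpret CS d G \<rho> \<kappa> using assms by (unfold_locales)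
  show ?thesis by (rule main)
qed

end
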